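(* Assume Assumptions 1 and 2 hold. Then, as $n\to\infty$, uniformly in $k$: (1) $\mathbb{E}[Z_{1,k}Z_{2,k}]=-\frac{1}{n-1}$ (for every $n\ge2$); (2) for every $p\ge1$, $\mathbb{E}[|Z_{1,k}|^p]=O(1)$; (3) $\mathbb{E}[Z_{1,k}^2Z_{2,k}^2]=1+o(1)$; (4) $\mathbb{E}[Z_{1,k}^3Z_{2,k}]=O(1/n)$; (5) $\mathbb{E}[Z_{1,k}^2Z_{2,k}Z_{3,k}]=O(1/n)$; (6) $\mathbb{E}[Z_{1,k}Z_{2,k}Z_{3,k}Z_{4,k}]=O(1/n^2)$; (7) $\mathbb{E}[Z_{1,k}^5Z_{2,k}]=O(1/n)$; (8) $\mathbb{E}[Z_{1,k}^3Z_{2,k}^3]=O(1)$; (9) $\mathbb{E}[Z_{1,k}^4Z_{2,k}^2]=O(1)$; (10) $\mathbb{E}[Z_{1,k}^4Z_{2,k}Z_{3,k}]=O(1/n)$; (11) $\mathbb{E}[Z_{1,k}^3Z_{2,k}^2Z_{3,k}]=O(1/n)$; (12) $\mathbb{E}[Z_{1,k}^3Z_{2,k}Z_{3,k}Z_{4,k}]=O(1/n^2)$.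
   Context: Let $A=(A_{i,k})_{1\le i\le n,\,1\le k\le N}$ be a random matrix with independent columns, such that for each $k$ the entries $A_{1,k},\dots,A_{n,k}$ are i.i.d.; write $m_k=\mathbb{E}[A_{1,k}]$ and $\sigma_k^2=\mathrm{Var}(A_{1,k})$. Put $\bar A_k=\frac1n\sum_{i=1}^n A_{i,k}$, $s_k^2=\frac1n\sum_{i=1}^n(A_{i,k}-\bar A_k)^2$ (assumed $>0$ a.s.), and $Z_{i,k}=(A_{i,k}-\bar A_k)/s_k$. Assumption 1: there exist $d>0$, $C>0$ and a neighborhood $V_0$ of $0$ such that for all $\lambda\in V_0$, all $i\neq j$ and all $k$: (1.1) $\mathbb{E}[\exp(\lambda((A_{i,k}-m_k)^2-\sigma_k^2))]\le C\exp(d\lambda^2)$; (1.2) $\mathbb{E}[\exp(\lambda(A_{i,k}-m_k))]\le C\exp(d\lambda^2)$; (1.3) $\mathbb{E}[\exp(\lambda(A_{i,k}-m_k)(A_{j,k}-m_k))]\le C\exp(d\lambda^2)$. Assumption 2: (2.1) $\inf_{k}\sigma_k^2=\delta_{min}>0$; (2.2) $\sup_k\sigma_k^2=\delta_{max}<+\infty$. *)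

theory Defs
  imports "HOL-Probability.Probability"
begin

text \<open>The matrix entries: A i k is the entry in row i, column k (0-based indices,
  so the paper's row 1 is index 0). Only the first n rows are used for sample size n.\<close>

definition col_mean :: "(nat \<Rightarrow> nat \<Rightarrow> 'a \<Rightarrow> real) \<Rightarrow> nat \<Rightarrow> nat \<Rightarrow> 'a \<Rightarrow> real" where
  "col_mean A n k \<omega> = (\<Sum>i<n. A i k \<omega>) / real n"

definition col_var :: "(nat \<Rightarrow> nat \<Rightarrow> 'a \<Rightarrow> real) \<Rightarrow> nat \<Rightarrow> nat \<Rightarrow> 'a \<Rightarrow> real" where
  "col_var A n k \<omega> = (\<Sum>i<n. (A i k \<omega> - col_mean A n k \<omega>)\<^sup>2) / real n"

definition Zst :: "(nat \<Rightarrow> nat \<Rightarrow> 'a \<Rightarrow> real) \<Rightarrow> nat \<Rightarrow> nat \<Rightarrow> nat \<Rightarrow> 'a \<Rightarrow> real" where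
  "Zst A n i k \<omega> = (A i k \<omega> - col_mean A n k \<omega>) / sqrt (col_var A n k \<omega>)"

definition unif_bigO :: "(nat \<Rightarrow> nat \<Rightarrow> real) \<Rightarrow> (nat \<Rightarrow> real) \<Rightarrow> bool" where
  "unif_bigO f g \<longleftrightarrow> (\<exists>C N0. \<forall>n\<ge>N0. \<forall>k. \<bar>f n k\<bar> \<le> C * g n)"

definition unif_littleo1 :: "(nat \<Rightarrow> nat \<Rightarrow> real) \<Rightarrow> bool" where
  "unif_littleo1 f \<longleftrightarrow> (\<forall>\<epsilon>>0. \<exists>N0. \<forall>n\<ge>N0. \<forall>k. \<bar>f n k\<bar> \<le> \<epsilon>)"

end

theory Submission
  imports Defs
begin

lemma pow_le_fact_exp:
  fixes x :: real assumes "0 \<le> x"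
  shows "x ^ n \<le> fact n * exp x"
proof -
  have "x ^ n / fact n \<le> (\<Sum>i\<le>n. x ^ i / fact i)"
    using assms by (intro member_le_sum) auto
  also have "\<dots> \<le> exp x"
    using assms summable_exp_generic[of x]
    by (auto simp: exp_def divide_inverse ac_simps intro!: sum_le_suminf)
  finally show ?thesis by (simp add: field_simps)
qed

lemma exp_taylor1_bound:
  fixes x :: real
  shows "exp x \<le> 1 + x + x\<^sup>2 * exp \<bar>x\<bar>"
proof -
  have "norm (exp x - (\<Sum>i\<le>1. x ^ i / fact i)) \<le> exp (norm x) * (norm x ^ Suc 1) / fact 1"
    by (rule Taylor_exp_field)
  then have "\<bar>exp x - (1 + x)\<bar> \<le> exp \<bar>x\<bar> * \<bar>x\<bar>^2"
    by (simp add: power2_eq_square)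
  then show ?thesis by (simp add: power2_abs abs_le_iff algebra_simps)
qed

lemma exp_neg_bound:
  fixes y :: real assumes "0 \<le> y"
  shows "exp (- y) \<le> 1 - y + y\<^sup>2"
proof -
  have "1 + y \<le> exp y" by simp
  then have "exp (-y) \<le> 1 / (1 + y)"
    using assms by (simp add: exp_minus field_simps)
  also have "\<dots> \<le> 1 - y + y\<^sup>2"
    using assms by (simp add: field_simps power2_eq_square mult_nonneg_nonneg)
  finally show ?thesis .
qed

lemma sq_le_exp: "(x::real)\<^sup>2 \<le> 2 * exp \<bar>x\<bar>"
  using pow_le_fact_exp[of "\<bar>x\<bar>" 2] by (simp add: power2_abs)

lemma exp_abs_le: "exp \<bar>x::real\<bar> \<le> exp x + exp (-x)"
  by (cases "x \<ge> 0") (auto simp: add_increasing add_increasing2)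

lemma pow_exp_decay:
  fixes c :: real assumes "c > 0"
  shows "real n ^ m * exp (- c * real n) \<le> fact m / c ^ m"
proof -
  have "(c * real n) ^ m \<le> fact m * exp (c * real n)"
    using assms by (intro pow_le_fact_exp) auto
  then have "c^m * real n ^ m \<le> fact m * exp (c * real n)"
    by (simp add: power_mult_distrib)
  then show ?thesis using assms
    by (simp add: exp_minus field_simps)
qed

context prob_space
begin

lemma chernoff_sum:
  fixes Y :: "'i \<Rightarrow> 'a \<Rightarrow> real"
  assumes fin: "finite I" and ind: "indep_vars (\<lambda>_. borel) Y I" and t: "0 \<le> t"
    and q: "0 \<le> q" and bnd: "\<And>i. i \<in> I \<Longrightarrow> (\<integral>\<^sup>+\<omega>. ennreal (exp (t * Y i \<omega>)) \<partial>M) \<le> ennreal q"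
  shows "prob {\<omega>\<in>space M. 0 \<le> (\<Sum>i\<in>I. Y i \<omega>)} \<le> q ^ card I"
proof -
  have rv: "\<And>i. i \<in> I \<Longrightarrow> Y i \<in> borel_measurable M"
    using ind by (auto simp: indep_vars_def)
  let ?S = "{\<omega>\<in>space M. 0 \<le> (\<Sum>i\<in>I. Y i \<omega>)}"
  have Smeas: "?S \<in> sets M" using rv fin by measurable
  have "ennreal (prob ?S) = emeasure M ?S" by (simp add: emeasure_eq_measure)
  also have "\<dots> = (\<integral>\<^sup>+\<omega>. indicator ?S \<omega> \<partial>M)" using Smeas by simp
  also have "\<dots> \<le> (\<integral>\<^sup>+\<omega>. (\<Prod>i\<in>I. ennreal (exp (t * Y i \<omega>))) \<partial>M)"
  proof (intro nn_integral_mono)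
    fix \<omega> assume "\<omega> \<in> space M"
    have "(\<Prod>i\<in>I. ennreal (exp (t * Y i \<omega>))) = ennreal (\<Prod>i\<in>I. exp (t * Y i \<omega>))"
      by (simp add: prod_ennreal)
    also have "\<dots> = ennreal (exp (t * (\<Sum>i\<in>I. Y i \<omega>)))"
      using fin by (simp add: exp_sum sum_distrib_left)
    finally have eq: "(\<Prod>i\<in>I. ennreal (exp (t * Y i \<omega>))) = ennreal (exp (t * (\<Sum>i\<in>I. Y i \<omega>)))" .
    show "indicator ?S \<omega> \<le> (\<Prod>i\<in>I. ennreal (exp (t * Y i \<omega>)))"
    proof (cases "\<omega> \<in> ?S")
      case True
      then have "0 \<le> t * (\<Sum>i\<in>I. Y i \<omega>)" using t by simp
      then have "1 \<le> exp (t * (\<Sum>i\<in>I. Y i \<omega>))" by simp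
      then show ?thesis using True eq by simp
    qed simp
  qed
  also have "\<dots> = (\<Prod>i\<in>I. \<integral>\<^sup>+\<omega>. ennreal (exp (t * Y i \<omega>)) \<partial>M)"
    by (rule indep_vars_nn_integral[OF fin])
       (auto intro!: indep_vars_compose2[OF ind])
  also have "\<dots> \<le> (\<Prod>i\<in>I. ennreal q)"
    by (intro prod_mono_ennreal bnd)
  also have "\<dots> = ennreal (q ^ card I)"
    by (subst prod_ennreal) (use q in auto)
  finally show ?thesis using q by (simp add: ennreal_le_iff)
qed

lemma ident_integral:
  assumes X: "X \<in> borel_measurable M" and Y: "Y \<in> borel_measurable M"
    and d: "distr M borel X = distr M borel Y"
    and f: "f \<in> borel_measurable borel"
  shows "(\<integral>\<omega>. f (X \<omega>) \<partial>M) = (\<integral>\<omega>. (f (Y \<omega>)::real) \<partial>M)"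
proof -
  have "(\<integral>\<omega>. f (X \<omega>) \<partial>M) = (\<integral>x. f x \<partial>distr M borel X)"
    using X f by (simp add: integral_distr)
  also have "\<dots> = (\<integral>x. f x \<partial>distr M borel Y)" by (simp add: d)
  also have "\<dots> = (\<integral>\<omega>. f (Y \<omega>) \<partial>M)"
    using Y f by (simp add: integral_distr)
  finally show ?thesis .
qed

lemma ident_integrable:
  assumes X: "X \<in> borel_measurable M" and Y: "Y \<in> borel_measurable M"
    and d: "distr M borel X = distr M borel Y"
    and f: "f \<in> borel_measurable borel" and int: "integrable M (\<lambda>\<omega>. (f (Y \<omega>)::real))"
  shows "integrable M (\<lambda>\<omega>. f (X \<omega>))"
proof -
  have "integrable (distr M borel Y) f" using int Y f by (simp add: integrable_distr_eq)
  then have "integrable (distr M borel X) f" by (simp add: d)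
  then show ?thesis using X f by (simp add: integrable_distr_eq)
qed

lemma ident_nn_integral:
  assumes X: "X \<in> borel_measurable M" and Y: "Y \<in> borel_measurable M"
    and d: "distr M borel X = distr M borel Y"
    and f: "f \<in> borel_measurable borel"
  shows "(\<integral>\<^sup>+\<omega>. f (X \<omega>) \<partial>M) = (\<integral>\<^sup>+\<omega>. (f (Y \<omega>)::ennreal) \<partial>M)"
proof -
  have "(\<integral>\<^sup>+\<omega>. f (X \<omega>) \<partial>M) = (\<integral>\<^sup>+x. f x \<partial>distr M borel X)"
    using X f by (simp add: nn_integral_distr)
  also have "\<dots> = (\<integral>\<^sup>+x. f x \<partial>distr M borel Y)" by (simp add: d)
  also have "\<dots> = (\<integral>\<^sup>+\<omega>. f (Y \<omega>) \<partial>M)"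
    using Y f by (simp add: nn_integral_distr)
  finally show ?thesis .
qed

end

definition zv :: "nat \<Rightarrow> (nat \<Rightarrow> real) \<Rightarrow> nat \<Rightarrow> real" where
  "zv n y = (\<lambda>i. if i < n then (y i - (\<Sum>j<n. y j) / real n) /
      sqrt ((\<Sum>j<n. (y j - (\<Sum>l<n. y l) / real n)\<^sup>2) / real n) else 0)"

lemma Zst_zv: "i < n \<Longrightarrow> Zst A n i k \<omega> = zv n (\<lambda>j. A j k \<omega>) i"
  by (simp add: Zst_def zv_def col_var_def col_mean_def)

lemma zv_restrict: "zv n (restrict y {..<n}) = zv n y"
  by (simp add: zv_def fun_eq_iff)

lemma zv_perm:
  assumes "\<tau> permutes {..<n}"
  shows "zv n (y \<circ> \<tau>) = zv n y \<circ> \<tau>"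
proof -
  have s: "(\<Sum>j<n. f (\<tau> j)) = (\<Sum>j<n. f j)" for f :: "nat \<Rightarrow> real"
    using sum.permute[OF assms, of f] by (simp add: comp_def)
  have lt: "i < n \<longleftrightarrow> \<tau> i < n" for i
    using assms by (metis lessThan_iff permutes_in_image)
  have fx: "\<not> i < n \<Longrightarrow> \<tau> i = i" for i
    using assms by (simp add: permutes_not_in)
  have s1: "(\<Sum>j<n. y (\<tau> j)) = (\<Sum>j<n. y j)" by (rule s)
  have s2: "(\<Sum>j<n. (y (\<tau> j) - c)\<^sup>2) = (\<Sum>j<n. (y j - c)\<^sup>2)" for c
    by (rule s[of "\<lambda>j. (y j - c)\<^sup>2"])
  show ?thesis
  proof (rule ext)
    fix i
    show "zv n (y \<circ> \<tau>) i = (zv n y \<circ> \<tau>) i"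
    proof (cases "i < n")
      case True
      then have "\<tau> i < n" using lt by blast
      then show ?thesis using True unfolding zv_def comp_def by (simp only: s1 s2 if_True)
    next
      case False
      then show ?thesis using fx[OF False] unfolding zv_def comp_def by simp
    qed
  qed
qed

lemma zv_measurable[measurable]:
  "zv n \<in> measurable (Pi\<^sub>M {..<n} (\<lambda>_. borel)) (Pi\<^sub>M UNIV (\<lambda>_. borel))"
proof (rule measurable_PiM_single')
  fix i :: nat
  show "(\<lambda>y. zv n y i) \<in> borel_measurable (Pi\<^sub>M {..<n} (\<lambda>_. borel))"
  proof (cases "i < n")
    case True
    have c: "\<And>j. j \<in> {..<n} \<Longrightarrow> (\<lambda>y. y j) \<in> borel_measurable (Pi\<^sub>M {..<n} (\<lambda>_. borel))"
      by (rule measurable_component_singleton)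
    have ci: "(\<lambda>y. y i) \<in> borel_measurable (Pi\<^sub>M {..<n} (\<lambda>_. (borel::real measure)))"
      using True by (intro measurable_component_singleton) auto
    have e: "(\<lambda>y. zv n y i) = (\<lambda>y. (y i - (\<Sum>j<n. y j) / real n) /
      sqrt ((\<Sum>j<n. (y j - (\<Sum>l<n. y l) / real n)\<^sup>2) / real n))"
      using True by (simp add: zv_def fun_eq_iff)
    show ?thesis unfolding e
      by (intro borel_measurable_divide borel_measurable_diff borel_measurable_sqrt
          borel_measurable_sum borel_measurable_power ci c borel_measurable_const) auto
  qed (simp add: zv_def)
qed (auto simp: space_PiM)

context prob_space
begin

lemma exch_vec:
  fixes X :: "nat \<Rightarrow> 'a \<Rightarrow> real"
  assumes rv: "\<And>i. X i \<in> borel_measurable M"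
    and ind: "indep_vars (\<lambda>_. borel) X UNIV"
    and ident: "\<And>i. distr M borel (X i) = distr M borel (X 0)"
    and tau: "\<tau> permutes {..<n}" and n: "0 < n"
    and g: "g \<in> borel_measurable (Pi\<^sub>M {..<n} (\<lambda>_. borel))"
  shows "(\<integral>\<omega>. g (\<lambda>i\<in>{..<n}. X (\<tau> i) \<omega>) \<partial>M) = (\<integral>\<omega>. (g (\<lambda>i\<in>{..<n}. X i \<omega>)::real) \<partial>M)"
proof -
  let ?J = "{..<n}"
  let ?D = "distr M borel (X 0)"
  let ?P = "Pi\<^sub>M ?J (\<lambda>_. borel::real measure)"
  let ?Q = "Pi\<^sub>M ?J (\<lambda>_. ?D)"
  let ?Y = "\<lambda>\<omega>. \<lambda>i\<in>?J. X i \<omega>"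
  let ?r = "\<lambda>y. \<lambda>i\<in>?J. y (\<tau> i)"
  have Jne: "?J \<noteq> {}" using n by auto
  have tJ: "\<And>i. i \<in> ?J \<Longrightarrow> \<tau> i \<in> ?J" using permutes_in_image[OF tau] by blast
  have indJ: "indep_vars (\<lambda>_. borel) X ?J"
    using ind by (rule indep_vars_subset) auto
  have "distr M ?P ?Y = Pi\<^sub>M ?J (\<lambda>i. distr M borel (X i))"
    using indep_vars_iff_distr_eq_PiM[OF Jne, where M'="\<lambda>_. borel" and X=X] rv indJ by simp
  also have "\<dots> = ?Q" by (intro PiM_cong refl ident)
  finally have dY: "distr M ?P ?Y = ?Q" .
  have sPQ: "sets ?P = sets ?Q"
    by (intro sets_PiM_cong) auto
  have Ymeas: "?Y \<in> measurable M ?P" using rv by measurable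
  have rmeasP: "?r \<in> measurable ?P ?P"
    using tJ by (intro measurable_restrict measurable_component_singleton) auto
  have rmeasQ: "?r \<in> measurable ?Q ?Q"
    using rmeasP by (simp add: measurable_cong_sets[OF sPQ sPQ])
  have gQ: "g \<in> borel_measurable ?Q" using g by (simp add: measurable_cong_sets[OF sPQ refl])
  have grP: "(\<lambda>y. g (?r y)) \<in> borel_measurable ?P" by (rule measurable_compose[OF rmeasP g])
  have grQ: "(\<lambda>y. g (?r y)) \<in> borel_measurable ?Q" by (rule measurable_compose[OF rmeasQ gQ])
  have eqf: "(\<lambda>i\<in>?J. X (\<tau> i) \<omega>) = ?r (?Y \<omega>)" for \<omega> using tJ by (auto simp: fun_eq_iff)
  have "(\<integral>\<omega>. g (\<lambda>i\<in>?J. X (\<tau> i) \<omega>) \<partial>M) = (\<integral>\<omega>. g (?r (?Y \<omega>)) \<partial>M)"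
    by (simp only: eqf)
  also have "\<dots> = (\<integral>y. g (?r y) \<partial>distr M ?P ?Y)"
    by (rule integral_distr[symmetric, OF Ymeas grP])
  also have "\<dots> = (\<integral>y. g (?r y) \<partial>?Q)" by (simp only: dY)
  also have "\<dots> = (\<integral>y. g y \<partial>distr ?Q ?Q ?r)"
    by (rule integral_distr[symmetric, OF rmeasQ gQ])
  also have "distr ?Q ?Q ?r = ?Q"
  proof -
    have pD: "prob_space ?D" by (rule prob_space_distr[OF rv])
    have "distr (Pi\<^sub>M ?J (\<lambda>_. ?D)) (\<Pi>\<^sub>M i\<in>?J. (\<lambda>_. ?D) (\<tau> i)) (\<lambda>\<omega>. \<lambda>n\<in>?J. \<omega> (\<tau> n))
          = (\<Pi>\<^sub>M i\<in>?J. (\<lambda>_. ?D) (\<tau> i))"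
      by (rule distr_PiM_reindex[OF pD permutes_inj_on[OF tau]]) (use tJ in blast)
    then show ?thesis by simp
  qed
  also have "(\<integral>y. g y \<partial>?Q) = (\<integral>y. g y \<partial>distr M ?P ?Y)" by (simp only: dY)
  also have "\<dots> = (\<integral>\<omega>. g (?Y \<omega>) \<partial>M)"
    by (rule integral_distr[OF Ymeas g])
  finally show ?thesis .
qed

lemma exch_zv:
  fixes X :: "nat \<Rightarrow> 'a \<Rightarrow> real"
  assumes rv: "\<And>i. X i \<in> borel_measurable M"
    and ind: "indep_vars (\<lambda>_. borel) X UNIV"
    and ident: "\<And>i. distr M borel (X i) = distr M borel (X 0)"
    and tau: "\<tau> permutes {..<n}" and n: "0 < n"
    and h: "h \<in> borel_measurable (Pi\<^sub>M UNIV (\<lambda>_. borel))"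
  shows "(\<integral>\<omega>. h (zv n (\<lambda>j. X j \<omega>) \<circ> \<tau>) \<partial>M) = (\<integral>\<omega>. (h (zv n (\<lambda>j. X j \<omega>))::real) \<partial>M)"
proof -
  have g: "(\<lambda>y. h (zv n y)) \<in> borel_measurable (Pi\<^sub>M {..<n} (\<lambda>_. borel))"
    using h by measurable
  have "zv n (\<lambda>j. X j \<omega>) \<circ> \<tau> = zv n (\<lambda>i\<in>{..<n}. X (\<tau> i) \<omega>)" for \<omega>
  proof -
    have "zv n (\<lambda>j. X j \<omega>) \<circ> \<tau> = zv n ((\<lambda>j. X j \<omega>) \<circ> \<tau>)" by (simp add: zv_perm[OF tau])
    also have "\<dots> = zv n (\<lambda>i\<in>{..<n}. X (\<tau> i) \<omega>)" by (simp add: zv_restrict comp_def)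
    finally show ?thesis .
  qed
  then have "(\<integral>\<omega>. h (zv n (\<lambda>j. X j \<omega>) \<circ> \<tau>) \<partial>M) = (\<integral>\<omega>. h (zv n (\<lambda>i\<in>{..<n}. X (\<tau> i) \<omega>)) \<partial>M)"
    by simp
  also have "\<dots> = (\<integral>\<omega>. h (zv n (\<lambda>i\<in>{..<n}. X i \<omega>)) \<partial>M)"
    by (rule exch_vec[OF rv ind ident tau n g])
  also have "\<dots> = (\<integral>\<omega>. h (zv n (\<lambda>j. X j \<omega>)) \<partial>M)"
    by (simp add: zv_restrict)
  finally show ?thesis .
qed

end

lemma zv_sum0: "(\<Sum>j<n. zv n y j) = 0"
proof (cases "n = 0")
  case False
  let ?mu = "(\<Sum>l<n. y l) / real n"
  let ?s = "sqrt ((\<Sum>j<n. (y j - ?mu)\<^sup>2) / real n)"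
  have "(\<Sum>j<n. zv n y j) = (\<Sum>j<n. (y j - ?mu) / ?s)" by (simp add: zv_def)
  also have "\<dots> = (\<Sum>j<n. (y j - ?mu)) / ?s" by (simp add: sum_divide_distrib)
  also have "(\<Sum>j<n. (y j - ?mu)) = 0" using False by (simp add: sum_subtractf)
  finally show ?thesis by simp
qed simp

lemma zv_sumsq:
  assumes "0 < (\<Sum>j<n. (y j - (\<Sum>l<n. y l) / real n)\<^sup>2) / real n"
  shows "(\<Sum>j<n. (zv n y j)\<^sup>2) = real n"
proof -
  let ?mu = "(\<Sum>l<n. y l) / real n"
  let ?V = "(\<Sum>j<n. (y j - ?mu)\<^sup>2) / real n"
  have n: "n > 0" using assms by (cases n) auto
  have "(\<Sum>j<n. (zv n y j)\<^sup>2) = (\<Sum>j<n. (y j - ?mu)\<^sup>2 / ?V)"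
    using assms by (simp add: zv_def power_divide)
  also have "\<dots> = (\<Sum>j<n. (y j - ?mu)\<^sup>2) / ?V" by (simp add: sum_divide_distrib)
  also have "\<dots> = real n" using assms n by (simp add: field_simps)
  finally show ?thesis .
qed

lemma zv_sq_le: "(zv n y i)\<^sup>2 \<le> real n"
proof (cases "i < n")
  case True
  let ?mu = "(\<Sum>l<n. y l) / real n"
  let ?V = "(\<Sum>j<n. (y j - ?mu)\<^sup>2) / real n"
  show ?thesis
  proof (cases "?V > 0")
    case True2: True
    have "(zv n y i)\<^sup>2 \<le> (\<Sum>j<n. (zv n y j)\<^sup>2)"
      using True by (intro member_le_sum) auto
    then show ?thesis using zv_sumsq[OF True2] by simp
  next
    case False
    have "?V \<ge> 0" by (intro divide_nonneg_nonneg sum_nonneg) auto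
    then have "?V = 0" using False by linarith
    then show ?thesis using True by (simp add: zv_def)
  qed
qed (simp add: zv_def)

lemma zv_abs_le: "\<bar>zv n y i\<bar> \<le> sqrt (real n)"
  using zv_sq_le[of n y i] real_sqrt_le_mono by fastforce

lemma zv_comp_measurable[measurable]:
  assumes [measurable]: "\<And>i. X i \<in> borel_measurable M"
  shows "(\<lambda>\<omega>. zv n (\<lambda>j. X j \<omega>)) \<in> measurable M (Pi\<^sub>M UNIV (\<lambda>_. borel))"
proof -
  have "(\<lambda>\<omega>. zv n (\<lambda>j\<in>{..<n}. X j \<omega>)) \<in> measurable M (Pi\<^sub>M UNIV (\<lambda>_. borel))"
    by measurable
  then show ?thesis by (simp add: zv_restrict)
qed

context prob_space
begin

lemma sum_split_identity:
  fixes X :: "nat \<Rightarrow> 'a \<Rightarrow> real" and c :: "(nat \<Rightarrow> real) \<Rightarrow> real"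
  assumes rv: "\<And>i. X i \<in> borel_measurable M"
    and ind: "indep_vars (\<lambda>_. borel) X UNIV"
    and ident: "\<And>i. distr M borel (X i) = distr M borel (X 0)"
    and rn: "r < n"
    and cm: "c \<in> borel_measurable (Pi\<^sub>M UNIV (\<lambda>_. borel))"
    and loc: "\<And>w w'. (\<And>i. i < r \<Longrightarrow> w i = w' i) \<Longrightarrow> c w = c w'"
    and cb: "\<And>\<omega>. \<omega> \<in> space M \<Longrightarrow> \<bar>c (zv n (\<lambda>j. X j \<omega>))\<bar> \<le> B"
    and \<phi>m: "\<phi> \<in> borel_measurable borel"
    and \<phi>b: "\<And>\<omega> j. \<omega> \<in> space M \<Longrightarrow> \<bar>\<phi> (zv n (\<lambda>j. X j \<omega>) j)\<bar> \<le> B2"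
    and sumS: "AE \<omega> in M. (\<Sum>j<n. \<phi> (zv n (\<lambda>j. X j \<omega>) j)) = S"
  shows "(\<Sum>j<r. \<integral>\<omega>. c (zv n (\<lambda>j. X j \<omega>)) * \<phi> (zv n (\<lambda>j. X j \<omega>) j) \<partial>M)
     + real (n - r) * (\<integral>\<omega>. c (zv n (\<lambda>j. X j \<omega>)) * \<phi> (zv n (\<lambda>j. X j \<omega>) r) \<partial>M)
     = S * (\<integral>\<omega>. c (zv n (\<lambda>j. X j \<omega>)) \<partial>M)"
proof -
  let ?Z = "\<lambda>\<omega>. zv n (\<lambda>j. X j \<omega>)"
  have n: "0 < n" using rn by simp
  have Zm: "?Z \<in> measurable M (Pi\<^sub>M UNIV (\<lambda>_. borel))" using rv by measurable
  have cZm: "(\<lambda>\<omega>. c (?Z \<omega>)) \<in> borel_measurable M" by (rule measurable_compose[OF Zm cm])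
  have Zjm: "(\<lambda>\<omega>. ?Z \<omega> j) \<in> borel_measurable M" for j
    by (rule measurable_compose[OF Zm measurable_component_singleton]) auto
  have pZjm: "(\<lambda>\<omega>. \<phi> (?Z \<omega> j)) \<in> borel_measurable M" for j
    by (rule measurable_compose[OF Zjm \<phi>m])
  have int: "integrable M (\<lambda>\<omega>. c (?Z \<omega>) * \<phi> (?Z \<omega> j))" for j
  proof (rule integrable_const_bound[where B="B*B2"])
    show "AE \<omega> in M. norm (c (?Z \<omega>) * \<phi> (?Z \<omega> j)) \<le> B * B2"
    proof (rule AE_I2)
      fix \<omega> assume w: "\<omega> \<in> space M"
      have "\<bar>c (?Z \<omega>)\<bar> * \<bar>\<phi> (?Z \<omega> j)\<bar> \<le> B * B2"
        by (rule mult_mono[OF cb[OF w] \<phi>b[OF w]]) (use cb[OF w] in auto)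
      then show "norm (c (?Z \<omega>) * \<phi> (?Z \<omega> j)) \<le> B * B2" by (simp add: abs_mult)
    qed
  qed (use cZm pZjm in measurable)
  have intc: "integrable M (\<lambda>\<omega>. c (?Z \<omega>))"
    by (rule integrable_const_bound[where B=B]) (use cb cZm in auto)
  have swap: "(\<integral>\<omega>. c (?Z \<omega>) * \<phi> (?Z \<omega> j) \<partial>M) = (\<integral>\<omega>. c (?Z \<omega>) * \<phi> (?Z \<omega> r) \<partial>M)"
    if j: "r \<le> j" "j < n" for j
  proof -
    let ?t = "Transposition.transpose r j"
    have tp: "?t permutes {..<n}" using j rn by (intro permutes_swap_id) auto
    have hm: "(\<lambda>w. c w * \<phi> (w r)) \<in> borel_measurable (Pi\<^sub>M UNIV (\<lambda>_. borel))"
      using cm \<phi>m by measurable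
    have ex: "(\<integral>\<omega>. (\<lambda>w. c w * \<phi> (w r)) (?Z \<omega> \<circ> ?t) \<partial>M) = (\<integral>\<omega>. (\<lambda>w. c w * \<phi> (w r)) (?Z \<omega>) \<partial>M)"
      by (rule exch_zv[OF rv ind ident tp n hm])
    have cl: "c (?Z \<omega> \<circ> ?t) = c (?Z \<omega>)" for \<omega>
      by (rule loc) (use j in \<open>auto simp: transpose_def\<close>)
    have tr: "(?Z \<omega> \<circ> ?t) r = ?Z \<omega> j" for \<omega> by (simp add: transpose_def)
    show ?thesis using ex by (simp only: cl tr)
  qed
  have "(\<Sum>j<n. \<integral>\<omega>. c (?Z \<omega>) * \<phi> (?Z \<omega> j) \<partial>M) = (\<integral>\<omega>. (\<Sum>j<n. c (?Z \<omega>) * \<phi> (?Z \<omega> j)) \<partial>M)"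
    using int by (simp add: integral_sum)
  also have "\<dots> = (\<integral>\<omega>. c (?Z \<omega>) * S \<partial>M)"
  proof (rule integral_cong_AE)
    show "AE \<omega> in M. (\<Sum>j<n. c (?Z \<omega>) * \<phi> (?Z \<omega> j)) = c (?Z \<omega>) * S"
      using sumS by eventually_elim (simp add: sum_distrib_left[symmetric])
  qed (use cZm pZjm in measurable)
  also have "\<dots> = S * (\<integral>\<omega>. c (?Z \<omega>) \<partial>M)" by (simp add: mult.commute)
  finally have tot: "(\<Sum>j<n. \<integral>\<omega>. c (?Z \<omega>) * \<phi> (?Z \<omega> j) \<partial>M) = S * (\<integral>\<omega>. c (?Z \<omega>) \<partial>M)" .
  have split: "{..<n} = {..<r} \<union> {r..<n}" using rn by auto
  have "(\<Sum>j<n. \<integral>\<omega>. c (?Z \<omega>) * \<phi> (?Z \<omega> j) \<partial>M)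
      = (\<Sum>j<r. \<integral>\<omega>. c (?Z \<omega>) * \<phi> (?Z \<omega> j) \<partial>M) + (\<Sum>j\<in>{r..<n}. \<integral>\<omega>. c (?Z \<omega>) * \<phi> (?Z \<omega> j) \<partial>M)"
    unfolding split by (rule sum.union_disjoint) auto
  also have "(\<Sum>j\<in>{r..<n}. \<integral>\<omega>. c (?Z \<omega>) * \<phi> (?Z \<omega> j) \<partial>M)
      = (\<Sum>j\<in>{r..<n}. \<integral>\<omega>. c (?Z \<omega>) * \<phi> (?Z \<omega> r) \<partial>M)"
    by (rule sum.cong[OF refl]) (rule swap; simp)
  also have "\<dots> = real (n - r) * (\<integral>\<omega>. c (?Z \<omega>) * \<phi> (?Z \<omega> r) \<partial>M)" by simp
  finally show ?thesis using tot by simp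
qed

end

locale rowseq = prob_space +
  fixes X :: "nat \<Rightarrow> 'a \<Rightarrow> real" and \<mu> t0 Cb \<delta> :: real
  assumes rv[measurable]: "\<And>i. X i \<in> borel_measurable M"
    and ind: "indep_vars (\<lambda>_. borel) X UNIV"
    and ident: "\<And>i. distr M borel (X i) = distr M borel (X 0)"
    and mu: "\<mu> = (\<integral>\<omega>. X 0 \<omega> \<partial>M)"
    and t0: "0 < t0" and Cb: "0 < Cb" and dpos: "0 < \<delta>"
    and mgf_int: "\<And>i s. s \<in> {t0, -t0} \<Longrightarrow> integrable M (\<lambda>\<omega>. exp (s * (X i \<omega> - \<mu>)))"
    and mgf_le: "\<And>i s. s \<in> {t0, -t0} \<Longrightarrow> (\<integral>\<omega>. exp (s * (X i \<omega> - \<mu>)) \<partial>M) \<le> Cb"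
    and var: "\<delta> \<le> (\<integral>\<omega>. (X 0 \<omega> - \<mu>)\<^sup>2 \<partial>M)"
begin

lemma expabs_int: "integrable M (\<lambda>\<omega>. exp (t0 * \<bar>X i \<omega> - \<mu>\<bar>))"
  and expabs_le: "(\<integral>\<omega>. exp (t0 * \<bar>X i \<omega> - \<mu>\<bar>) \<partial>M) \<le> 2 * Cb"
proof -
  have i1: "integrable M (\<lambda>\<omega>. exp (t0 * (X i \<omega> - \<mu>)))" by (rule mgf_int) simp
  have i2: "integrable M (\<lambda>\<omega>. exp (-t0 * (X i \<omega> - \<mu>)))" by (rule mgf_int) simp
  have pw: "exp (t0 * \<bar>X i \<omega> - \<mu>\<bar>) \<le> exp (t0 * (X i \<omega> - \<mu>)) + exp (-t0 * (X i \<omega> - \<mu>))" for \<omega>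
    using exp_abs_le[of "t0 * (X i \<omega> - \<mu>)"] t0 by (simp add: abs_mult)
  show int: "integrable M (\<lambda>\<omega>. exp (t0 * \<bar>X i \<omega> - \<mu>\<bar>))"
    by (rule Bochner_Integration.integrable_bound[OF Bochner_Integration.integrable_add[OF i1 i2]])
       (use pw in \<open>auto intro!: AE_I2\<close>)
  have "(\<integral>\<omega>. exp (t0 * \<bar>X i \<omega> - \<mu>\<bar>) \<partial>M) \<le> (\<integral>\<omega>. exp (t0 * (X i \<omega> - \<mu>)) + exp (-t0 * (X i \<omega> - \<mu>)) \<partial>M)"
    by (rule integral_mono[OF int Bochner_Integration.integrable_add[OF i1 i2] pw])
  also have "\<dots> = (\<integral>\<omega>. exp (t0 * (X i \<omega> - \<mu>)) \<partial>M) + (\<integral>\<omega>. exp (-t0 * (X i \<omega> - \<mu>)) \<partial>M)"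
    by (rule Bochner_Integration.integral_add[OF i1 i2])
  also have "\<dots> \<le> Cb + Cb" using mgf_le[of t0 i] mgf_le[of "-t0" i] by simp
  finally show "(\<integral>\<omega>. exp (t0 * \<bar>X i \<omega> - \<mu>\<bar>) \<partial>M) \<le> 2 * Cb" by simp
qed

definition Mm :: "nat \<Rightarrow> real" where "Mm m = fact (2*m) / t0 ^ (2*m) * (2 * Cb)"

lemma pow_pw: "(w::real) ^ (2*m) \<le> fact (2*m) / t0 ^ (2*m) * exp (t0 * \<bar>w\<bar>)"
proof -
  have "(t0 * \<bar>w\<bar>) ^ (2*m) \<le> fact (2*m) * exp (t0 * \<bar>w\<bar>)"
    using t0 by (intro pow_le_fact_exp) auto
  then have "t0 ^ (2*m) * w ^ (2*m) \<le> fact (2*m) * exp (t0 * \<bar>w\<bar>)"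
    by (simp add: power_mult_distrib power_even_abs)
  then show ?thesis using t0 by (simp add: field_simps)
qed

lemma pow_int: "integrable M (\<lambda>\<omega>. (X i \<omega> - \<mu>) ^ (2*m))"
  and pow_le: "(\<integral>\<omega>. (X i \<omega> - \<mu>) ^ (2*m) \<partial>M) \<le> Mm m"
proof -
  have ib: "integrable M (\<lambda>\<omega>. fact (2*m) / t0 ^ (2*m) * exp (t0 * \<bar>X i \<omega> - \<mu>\<bar>))"
    using expabs_int by simp
  show int: "integrable M (\<lambda>\<omega>. (X i \<omega> - \<mu>) ^ (2*m))"
  proof (rule Bochner_Integration.integrable_bound[OF ib])
    show "AE \<omega> in M. norm ((X i \<omega> - \<mu>) ^ (2*m)) \<le> norm (fact (2*m) / t0 ^ (2*m) * exp (t0 * \<bar>X i \<omega> - \<mu>\<bar>))"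
    proof (rule AE_I2)
      fix \<omega>
      have "0 \<le> (X i \<omega> - \<mu>) ^ (2*m)" by (simp add: zero_le_even_power)
      moreover have "0 \<le> fact (2*m) / t0 ^ (2*m) * exp (t0 * \<bar>X i \<omega> - \<mu>\<bar>)" using t0 by simp
      ultimately show "norm ((X i \<omega> - \<mu>) ^ (2*m)) \<le> norm (fact (2*m) / t0 ^ (2*m) * exp (t0 * \<bar>X i \<omega> - \<mu>\<bar>))"
        using pow_pw[of "X i \<omega> - \<mu>" m] by simp
    qed
  qed simp
  have "(\<integral>\<omega>. (X i \<omega> - \<mu>) ^ (2*m) \<partial>M) \<le> (\<integral>\<omega>. fact (2*m) / t0 ^ (2*m) * exp (t0 * \<bar>X i \<omega> - \<mu>\<bar>) \<partial>M)"
    by (rule integral_mono[OF int ib pow_pw])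
  also have "\<dots> = fact (2*m) / t0 ^ (2*m) * (\<integral>\<omega>. exp (t0 * \<bar>X i \<omega> - \<mu>\<bar>) \<partial>M)" by simp
  also have "\<dots> \<le> fact (2*m) / t0 ^ (2*m) * (2 * Cb)"
    using expabs_le t0 by (intro mult_left_mono) auto
  finally show "(\<integral>\<omega>. (X i \<omega> - \<mu>) ^ (2*m) \<partial>M) \<le> Mm m" by (simp add: Mm_def)
qed

lemma Mm_pos: "0 < Mm m" using t0 Cb by (simp add: Mm_def)

lemma sq_int: "integrable M (\<lambda>\<omega>. (X i \<omega> - \<mu>)\<^sup>2)"
  using pow_int[of i 1] by simp

lemma W_int: "integrable M (\<lambda>\<omega>. X i \<omega> - \<mu>)"
proof (rule Bochner_Integration.integrable_bound[OF Bochner_Integration.integrable_add[OF integrable_const[of 1] sq_int[of i]]])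
  show "AE \<omega> in M. norm (X i \<omega> - \<mu>) \<le> norm (1 + (X i \<omega> - \<mu>)\<^sup>2)"
  proof (rule AE_I2)
    fix \<omega>
    have "\<bar>w\<bar> \<le> 1 + w\<^sup>2" for w :: real
    proof -
      have "0 \<le> (\<bar>w\<bar> - 1)\<^sup>2" by simp
      then have "2*\<bar>w\<bar> \<le> \<bar>w\<bar>*\<bar>w\<bar> + 1" by (simp add: power2_eq_square algebra_simps)
      moreover have "\<bar>w\<bar>*\<bar>w\<bar> = w\<^sup>2" by (simp add: power2_eq_square abs_mult_self_eq)
      moreover have "0 \<le> w\<^sup>2" by simp
      ultimately show ?thesis by linarith
    qed
    then show "norm (X i \<omega> - \<mu>) \<le> norm (1 + (X i \<omega> - \<mu>)\<^sup>2)" by simp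
  qed
qed simp

lemma X_int: "integrable M (X i)"
proof -
  have "integrable M (\<lambda>\<omega>. (X i \<omega> - \<mu>) + \<mu>)"
    by (rule Bochner_Integration.integrable_add[OF W_int[of i] integrable_const])
  moreover have "(\<lambda>\<omega>. (X i \<omega> - \<mu>) + \<mu>) = X i" by (simp add: fun_eq_iff)
  ultimately show ?thesis by simp
qed

lemma EX: "(\<integral>\<omega>. X i \<omega> \<partial>M) = \<mu>"
  using ident_integral[OF rv[of i] rv[of 0] ident[of i], of "\<lambda>x. x"] mu by simp

lemma EW: "(\<integral>\<omega>. X i \<omega> - \<mu> \<partial>M) = 0"
  using EX[of i] X_int[of i] by (simp add: prob_space)

lemma EW2: "\<delta> \<le> (\<integral>\<omega>. (X i \<omega> - \<mu>)\<^sup>2 \<partial>M)"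
  using ident_integral[OF rv[of i] rv[of 0] ident[of i], of "\<lambda>x. (x - \<mu>)\<^sup>2"] var by simp

lemma EW4: "(\<integral>\<omega>. (X i \<omega> - \<mu>)^4 \<partial>M) \<le> Mm 2"
  using pow_le[of i 2] by simp

lemma W4_int: "integrable M (\<lambda>\<omega>. (X i \<omega> - \<mu>)^4)"
  using pow_int[of i 2] by simp

end

lemma var_identity:
  fixes x :: "nat \<Rightarrow> real" assumes n: "0 < n"
  shows "(\<Sum>j<n. (x j - (\<Sum>l<n. x l) / real n)\<^sup>2) / real n
       = (\<Sum>j<n. (x j - \<mu>)\<^sup>2) / real n - ((\<Sum>j<n. (x j - \<mu>)) / real n)\<^sup>2"
proof -
  define S where "S = (\<Sum>j<n. (x j - \<mu>))"
  define b where "b = S / real n"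
  have mean: "(\<Sum>l<n. x l) / real n = \<mu> + b"
    using n by (simp add: b_def S_def sum_subtractf field_simps)
  have "(\<Sum>j<n. (x j - (\<mu> + b))\<^sup>2) = (\<Sum>j<n. (x j - \<mu>)\<^sup>2 - 2 * b * (x j - \<mu>) + b\<^sup>2)"
    by (rule sum.cong) (auto simp: power2_eq_square algebra_simps)
  also have "\<dots> = (\<Sum>j<n. (x j - \<mu>)\<^sup>2) - (\<Sum>j<n. 2 * b * (x j - \<mu>)) + (\<Sum>j<n. b\<^sup>2)"
    by (simp add: sum.distrib sum_subtractf)
  also have "(\<Sum>j<n. 2 * b * (x j - \<mu>)) = 2 * b * S"
    by (simp add: S_def sum_distrib_left)
  also have "(\<Sum>j<n. b\<^sup>2) = real n * b\<^sup>2" by simp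
  finally have "(\<Sum>j<n. (x j - (\<mu> + b))\<^sup>2) = (\<Sum>j<n. (x j - \<mu>)\<^sup>2) - 2 * b * S + real n * b\<^sup>2" .
  then show ?thesis unfolding mean using n
    by (simp add: b_def S_def[symmetric] field_simps power2_eq_square)
qed

context rowseq
begin

definition "t1 = \<delta> / (8 * Mm 2)"
definition "c1 = \<delta>\<^sup>2 / (64 * Mm 2)"

lemma c1_pos: "0 < c1" using dpos Mm_pos[of 2] by (simp add: c1_def)

lemma chern1: "(\<integral>\<^sup>+\<omega>. ennreal (exp (t1 * (3*\<delta>/4 - (X i \<omega> - \<mu>)\<^sup>2))) \<partial>M) \<le> ennreal (exp (- c1))"
proof -
  let ?K = "Mm 2"
  have K: "0 < ?K" by (rule Mm_pos)
  have t1p: "0 < t1" using dpos K by (simp add: t1_def)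
  let ?W2 = "\<lambda>\<omega>. (X i \<omega> - \<mu>)\<^sup>2"
  have e1m: "(\<lambda>\<omega>. exp (- (t1 * ?W2 \<omega>))) \<in> borel_measurable M" by measurable
  have e1i: "integrable M (\<lambda>\<omega>. exp (- (t1 * ?W2 \<omega>)))"
    by (rule integrable_const_bound[where B=1]) (use t1p in \<open>auto intro!: AE_I2\<close>)
  have pw: "exp (- (t1 * ?W2 \<omega>)) \<le> 1 - t1 * ?W2 \<omega> + t1\<^sup>2 * (X i \<omega> - \<mu>)^4" for \<omega>
  proof -
    have "(t1 * ?W2 \<omega>)\<^sup>2 = t1\<^sup>2 * (X i \<omega> - \<mu>)^4"
      by (simp add: power_mult_distrib flip: power_mult)
    then show ?thesis using exp_neg_bound[of "t1 * ?W2 \<omega>"] t1p by simp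
  qed
  have ri: "integrable M (\<lambda>\<omega>. 1 - t1 * ?W2 \<omega> + t1\<^sup>2 * (X i \<omega> - \<mu>)^4)"
    using sq_int[of i] W4_int[of i] by simp
  have "(\<integral>\<omega>. exp (- (t1 * ?W2 \<omega>)) \<partial>M) \<le> (\<integral>\<omega>. 1 - t1 * ?W2 \<omega> + t1\<^sup>2 * (X i \<omega> - \<mu>)^4 \<partial>M)"
    by (rule integral_mono[OF e1i ri pw])
  also have "\<dots> = 1 - t1 * (\<integral>\<omega>. ?W2 \<omega> \<partial>M) + t1\<^sup>2 * (\<integral>\<omega>. (X i \<omega> - \<mu>)^4 \<partial>M)"
    using sq_int[of i] W4_int[of i] by (simp add: prob_space)
  also have "\<dots> \<le> 1 - t1 * \<delta> + t1\<^sup>2 * ?K"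
    using EW2[of i] EW4[of i] t1p
    by (intro add_mono diff_mono mult_left_mono order_refl) auto
  also have "\<dots> \<le> exp (- t1 * \<delta> + t1\<^sup>2 * ?K)"
    using exp_ge_add_one_self[of "- t1 * \<delta> + t1\<^sup>2 * ?K"] by (simp add: algebra_simps)
  finally have b1: "(\<integral>\<omega>. exp (- (t1 * ?W2 \<omega>)) \<partial>M) \<le> exp (- t1 * \<delta> + t1\<^sup>2 * ?K)" .
  have eq: "exp (t1 * (3*\<delta>/4 - ?W2 \<omega>)) = exp (t1 * (3*\<delta>/4)) * exp (- (t1 * ?W2 \<omega>))" for \<omega>
    by (simp add: exp_add[symmetric] algebra_simps)
  have ii: "integrable M (\<lambda>\<omega>. exp (t1 * (3*\<delta>/4 - ?W2 \<omega>)))"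
    unfolding eq using e1i by simp
  have "(\<integral>\<omega>. exp (t1 * (3*\<delta>/4 - ?W2 \<omega>)) \<partial>M) = exp (t1 * (3*\<delta>/4)) * (\<integral>\<omega>. exp (- (t1 * ?W2 \<omega>)) \<partial>M)"
    unfolding eq by simp
  also have "\<dots> \<le> exp (t1 * (3*\<delta>/4)) * exp (- t1 * \<delta> + t1\<^sup>2 * ?K)"
    using b1 by (intro mult_left_mono) auto
  also have "\<dots> = exp (- c1)"
  proof -
    have "t1 * (3*\<delta>/4) + (- t1 * \<delta> + t1\<^sup>2 * ?K) = - c1"
      using K by (simp add: t1_def c1_def power2_eq_square field_simps)
    then show ?thesis by (simp add: exp_add[symmetric])
  qed
  finally have "(\<integral>\<omega>. exp (t1 * (3*\<delta>/4 - ?W2 \<omega>)) \<partial>M) \<le> exp (- c1)" .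
  then show ?thesis
    by (subst nn_integral_eq_integral[OF ii]) auto
qed

definition "aa = sqrt \<delta> / 2"
definition "K2 = 16 * Cb / t0\<^sup>2"
definition "s2 = min (t0/2) (aa / (2 * K2))"
definition "c2 = s2 * aa / 2"

lemma aa_pos: "0 < aa" using dpos by (simp add: aa_def)
lemma K2_pos: "0 < K2" using Cb t0 by (simp add: K2_def)
lemma s2_pos: "0 < s2" using aa_pos K2_pos t0 by (simp add: s2_def)
lemma c2_pos: "0 < c2" using s2_pos aa_pos by (simp add: c2_def)

lemma chern2:
  assumes sg: "sg \<in> {1, -1}"
  shows "(\<integral>\<^sup>+\<omega>. ennreal (exp (s2 * (sg * (X i \<omega> - \<mu>) - aa))) \<partial>M) \<le> ennreal (exp (- c2))"
proof -
  let ?W = "\<lambda>\<omega>. X i \<omega> - \<mu>"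
  have asg: "\<bar>sg\<bar> = 1" "sg\<^sup>2 = 1" using sg by auto
  have s2le: "s2 \<le> t0/2" by (simp add: s2_def)
  have s2le2: "s2 \<le> aa / (2*K2)" by (simp add: s2_def)
  have EI: "integrable M (\<lambda>\<omega>. exp (t0 * \<bar>?W \<omega>\<bar>))" by (rule expabs_int)
  have pwA: "exp (s2 * (sg * w)) \<le> exp (t0 * \<bar>w\<bar>)" for w
  proof -
    have "s2 * (sg * w) \<le> s2 * \<bar>w\<bar>" using s2_pos asg
      by (intro mult_left_mono) (auto simp: abs_mult intro: order_trans[OF abs_ge_self])
    also have "\<dots> \<le> t0 * \<bar>w\<bar>" using s2le t0 by (intro mult_right_mono) auto
    finally show ?thesis by simp
  qed
  have pwB: "w\<^sup>2 * exp (s2 * \<bar>w\<bar>) \<le> 8 / t0\<^sup>2 * exp (t0 * \<bar>w\<bar>)" for w :: real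
  proof -
    have "(t0 * w / 2)\<^sup>2 \<le> 2 * exp \<bar>t0 * w / 2\<bar>" by (rule sq_le_exp)
    then have "w\<^sup>2 \<le> 8 / t0\<^sup>2 * exp (t0 * \<bar>w\<bar> / 2)" using t0
      by (simp add: power_divide power_mult_distrib abs_mult field_simps)
    moreover have "exp (s2 * \<bar>w\<bar>) \<le> exp (t0 * \<bar>w\<bar> / 2)"
      using mult_right_mono[OF s2le abs_ge_zero[of w]] by simp
    ultimately have "w\<^sup>2 * exp (s2 * \<bar>w\<bar>) \<le> (8 / t0\<^sup>2 * exp (t0 * \<bar>w\<bar> / 2)) * exp (t0 * \<bar>w\<bar> / 2)"
      by (intro mult_mono) auto
    also have "\<dots> = 8 / t0\<^sup>2 * exp (t0 * \<bar>w\<bar>)" by (simp add: exp_add[symmetric])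
    finally show ?thesis .
  qed
  have pwC: "exp (s2 * (sg * w)) \<le> 1 + s2 * (sg * w) + s2\<^sup>2 * (w\<^sup>2 * exp (s2 * \<bar>w\<bar>))" for w
  proof -
    have "exp (s2 * (sg * w)) \<le> 1 + s2 * (sg * w) + (s2 * (sg * w))\<^sup>2 * exp \<bar>s2 * (sg * w)\<bar>"
      by (rule exp_taylor1_bound)
    also have "(s2 * (sg * w))\<^sup>2 = s2\<^sup>2 * w\<^sup>2" using asg by (simp add: power_mult_distrib)
    also have "\<bar>s2 * (sg * w)\<bar> = s2 * \<bar>w\<bar>" using asg s2_pos by (simp add: abs_mult)
    finally show ?thesis by (simp add: algebra_simps)
  qed
  have i1: "integrable M (\<lambda>\<omega>. exp (s2 * (sg * ?W \<omega>)))"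
    by (rule Bochner_Integration.integrable_bound[OF EI]) (use pwA in \<open>auto intro!: AE_I2\<close>)
  have i2: "integrable M (\<lambda>\<omega>. (?W \<omega>)\<^sup>2 * exp (s2 * \<bar>?W \<omega>\<bar>))"
  proof (rule Bochner_Integration.integrable_bound[of _ "\<lambda>\<omega>. 8 / t0\<^sup>2 * exp (t0 * \<bar>?W \<omega>\<bar>)"])
    show "integrable M (\<lambda>\<omega>. 8 / t0\<^sup>2 * exp (t0 * \<bar>?W \<omega>\<bar>))" using EI by simp
    show "AE \<omega> in M. norm ((?W \<omega>)\<^sup>2 * exp (s2 * \<bar>?W \<omega>\<bar>)) \<le> norm (8 / t0\<^sup>2 * exp (t0 * \<bar>?W \<omega>\<bar>))"
      using pwB by (auto intro!: AE_I2)
  qed measurable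
  have i3: "integrable M (\<lambda>\<omega>. 1 + s2 * (sg * ?W \<omega>) + s2\<^sup>2 * ((?W \<omega>)\<^sup>2 * exp (s2 * \<bar>?W \<omega>\<bar>)))"
    using W_int[of i] i2 by simp
  have "(\<integral>\<omega>. exp (s2 * (sg * ?W \<omega>)) \<partial>M) \<le> (\<integral>\<omega>. 1 + s2 * (sg * ?W \<omega>) + s2\<^sup>2 * ((?W \<omega>)\<^sup>2 * exp (s2 * \<bar>?W \<omega>\<bar>)) \<partial>M)"
    by (rule integral_mono[OF i1 i3 pwC])
  also have "\<dots> = 1 + s2 * sg * (\<integral>\<omega>. ?W \<omega> \<partial>M) + s2\<^sup>2 * (\<integral>\<omega>. (?W \<omega>)\<^sup>2 * exp (s2 * \<bar>?W \<omega>\<bar>) \<partial>M)"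
    using W_int[of i] i2 by (simp add: prob_space)
  also have "\<dots> = 1 + s2\<^sup>2 * (\<integral>\<omega>. (?W \<omega>)\<^sup>2 * exp (s2 * \<bar>?W \<omega>\<bar>) \<partial>M)"
    using EW[of i] by simp
  also have "\<dots> \<le> 1 + s2\<^sup>2 * K2"
  proof -
    have "(\<integral>\<omega>. (?W \<omega>)\<^sup>2 * exp (s2 * \<bar>?W \<omega>\<bar>) \<partial>M) \<le> (\<integral>\<omega>. 8 / t0\<^sup>2 * exp (t0 * \<bar>?W \<omega>\<bar>) \<partial>M)"
      by (rule integral_mono[OF i2 _ pwB]) (use EI in simp)
    also have "\<dots> = 8 / t0\<^sup>2 * (\<integral>\<omega>. exp (t0 * \<bar>?W \<omega>\<bar>) \<partial>M)" by simp
    also have "\<dots> \<le> 8 / t0\<^sup>2 * (2 * Cb)" using expabs_le[of i] t0 by (intro mult_left_mono) auto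
    also have "\<dots> = K2" by (simp add: K2_def)
    finally show ?thesis by (intro add_left_mono mult_left_mono) auto
  qed
  also have "\<dots> \<le> exp (s2\<^sup>2 * K2)" using exp_ge_add_one_self[of "s2\<^sup>2 * K2"] by simp
  finally have b: "(\<integral>\<omega>. exp (s2 * (sg * ?W \<omega>)) \<partial>M) \<le> exp (s2\<^sup>2 * K2)" .
  have eq: "exp (s2 * (sg * ?W \<omega> - aa)) = exp (- (s2 * aa)) * exp (s2 * (sg * ?W \<omega>))" for \<omega>
    by (simp add: exp_add[symmetric] algebra_simps)
  have ii: "integrable M (\<lambda>\<omega>. exp (s2 * (sg * ?W \<omega> - aa)))" unfolding eq using i1 by simp
  have "(\<integral>\<omega>. exp (s2 * (sg * ?W \<omega> - aa)) \<partial>M) = exp (- (s2 * aa)) * (\<integral>\<omega>. exp (s2 * (sg * ?W \<omega>)) \<partial>M)"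
    unfolding eq by simp
  also have "\<dots> \<le> exp (- (s2 * aa)) * exp (s2\<^sup>2 * K2)" using b by (intro mult_left_mono) auto
  also have "\<dots> = exp (- (s2 * aa) + s2\<^sup>2 * K2)" by (simp only: exp_add)
  also have "\<dots> \<le> exp (- c2)"
  proof -
    have "s2 * K2 \<le> aa / 2" using s2le2 K2_pos by (simp add: field_simps)
    then have "s2\<^sup>2 * K2 \<le> s2 * (aa / 2)" using s2_pos
      by (simp add: power2_eq_square mult.assoc mult_left_mono)
    then show ?thesis by (simp add: c2_def)
  qed
  finally have "(\<integral>\<omega>. exp (s2 * (sg * ?W \<omega> - aa)) \<partial>M) \<le> exp (- c2)" .
  then show ?thesis
    by (subst nn_integral_eq_integral[OF ii]) auto
qed

end

lemma jensen_avg: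
  fixes w :: "nat \<Rightarrow> real" assumes n: "0 < n"
  shows "((\<Sum>j<n. w j) / real n) ^ (2*m) \<le> (\<Sum>j<n. w j ^ (2*m)) / real n"
proof -
  have "(\<lambda>x::real. x ^ (2*m)) (\<Sum>j\<in>{..<n}. (1 / real n) *\<^sub>R w j) \<le> (\<Sum>j\<in>{..<n}. (1 / real n) * (\<lambda>x. x ^ (2*m)) (w j))"
    using n by (intro convex_on_sum[where C=UNIV] convex_power_even) auto
  then show ?thesis by (simp add: sum_divide_distrib[symmetric] sum_distrib_left[symmetric])
qed

lemma two_pt:
  fixes a b :: real
  shows "(a - b) ^ (2*m) \<le> 4^m / 2 * (a ^ (2*m) + b ^ (2*m))"
proof -
  have cv: "convex_on UNIV (\<lambda>x::real. x ^ (2*m))" by (rule convex_power_even) auto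
  have c: "(a - b) ^ (2*m) \<le> 1/2 * (2*a) ^ (2*m) + 1/2 * (-2*b) ^ (2*m)"
    using conjunct2[OF cv[unfolded convex_on_def], rule_format, of "2*a" "-2*b" "1/2" "1/2"] by simp
  have f4: "(2::real) ^ (2*m) = 4 ^ m" by (simp add: power_mult)
  have f4': "(-2::real) ^ (2*m) = 4 ^ m" by (simp add: power_mult)
  have e1: "(2*a) ^ (2*m) = 4^m * a^(2*m)" by (simp only: power_mult_distrib f4)
  have e2: "(-2*b) ^ (2*m) = 4^m * b^(2*m)" by (simp only: power_mult_distrib f4')
  show ?thesis using c unfolding e1 e2 by (simp add: algebra_simps)
qed

context rowseq
begin

abbreviation "Vn n \<omega> \<equiv> (\<Sum>j<n. (X j \<omega> - (\<Sum>l<n. X l \<omega>) / real n)\<^sup>2) / real n"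

lemma tail_bound:
  assumes n: "0 < n"
  shows "prob {\<omega>\<in>space M. Vn n \<omega> < \<delta>/2} \<le> exp (- c1) ^ n + 2 * exp (- c2) ^ n"
proof -
  have indn: "indep_vars (\<lambda>_. borel) X {..<n}" by (rule indep_vars_subset[OF ind]) auto
  define E1 where "E1 = {\<omega>\<in>space M. 0 \<le> (\<Sum>j\<in>{..<n}. 3*\<delta>/4 - (X j \<omega> - \<mu>)\<^sup>2)}"
  define E2 where "E2 = {\<omega>\<in>space M. 0 \<le> (\<Sum>j\<in>{..<n}. 1 * (X j \<omega> - \<mu>) - aa)}"
  define E3 where "E3 = {\<omega>\<in>space M. 0 \<le> (\<Sum>j\<in>{..<n}. (-1) * (X j \<omega> - \<mu>) - aa)}"
  have p1: "prob E1 \<le> exp (- c1) ^ n"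
  proof -
    have "prob E1 \<le> exp (- c1) ^ card {..<n}"
      unfolding E1_def
    proof (rule chernoff_sum)
      show "indep_vars (\<lambda>_. borel) (\<lambda>j \<omega>. 3*\<delta>/4 - (X j \<omega> - \<mu>)\<^sup>2) {..<n}"
        by (rule indep_vars_compose2[OF indn]) measurable
      show "0 \<le> t1" using dpos Mm_pos[of 2] by (simp add: t1_def)
      show "(\<integral>\<^sup>+\<omega>. ennreal (exp (t1 * (3*\<delta>/4 - (X i \<omega> - \<mu>)\<^sup>2))) \<partial>M) \<le> ennreal (exp (- c1))" for i
        by (rule chern1)
    qed auto
    then show ?thesis by simp
  qed
  have p23: "prob {\<omega>\<in>space M. 0 \<le> (\<Sum>j\<in>{..<n}. sg * (X j \<omega> - \<mu>) - aa)} \<le> exp (- c2) ^ n"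
    if sg: "sg \<in> {1, -1}" for sg
  proof -
    have "prob {\<omega>\<in>space M. 0 \<le> (\<Sum>j\<in>{..<n}. sg * (X j \<omega> - \<mu>) - aa)} \<le> exp (- c2) ^ card {..<n}"
    proof (rule chernoff_sum)
      show "indep_vars (\<lambda>_. borel) (\<lambda>j \<omega>. sg * (X j \<omega> - \<mu>) - aa) {..<n}"
        by (rule indep_vars_compose2[OF indn]) measurable
      show "0 \<le> s2" using s2_pos by simp
      show "(\<integral>\<^sup>+\<omega>. ennreal (exp (s2 * (sg * (X i \<omega> - \<mu>) - aa))) \<partial>M) \<le> ennreal (exp (- c2))" for i
        by (rule chern2[OF sg])
    qed auto
    then show ?thesis by simp
  qed
  have p2: "prob E2 \<le> exp (- c2) ^ n" unfolding E2_def by (rule p23) simp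
  have p3: "prob E3 \<le> exp (- c2) ^ n" unfolding E3_def by (rule p23) simp
  have sub: "{\<omega>\<in>space M. Vn n \<omega> < \<delta>/2} \<subseteq> E1 \<union> E2 \<union> E3"
  proof
    fix \<omega> assume w: "\<omega> \<in> {\<omega>\<in>space M. Vn n \<omega> < \<delta>/2}"
    show "\<omega> \<in> E1 \<union> E2 \<union> E3"
    proof (rule ccontr)
      assume "\<omega> \<notin> E1 \<union> E2 \<union> E3"
      then have a1: "(\<Sum>j<n. 3*\<delta>/4 - (X j \<omega> - \<mu>)\<^sup>2) < 0"
        and a2: "(\<Sum>j<n. 1 * (X j \<omega> - \<mu>) - aa) < 0"
        and a3: "(\<Sum>j<n. (-1) * (X j \<omega> - \<mu>) - aa) < 0"
        using w by (auto simp: E1_def E2_def E3_def)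
      define S1 where "S1 = (\<Sum>j<n. X j \<omega> - \<mu>)"
      define S2 where "S2 = (\<Sum>j<n. (X j \<omega> - \<mu>)\<^sup>2)"
      have b1: "real n * (3*\<delta>/4) < S2" using a1 by (simp add: S2_def sum_subtractf)
      have b2: "S1 < real n * aa" using a2 by (simp add: S1_def sum_subtractf)
      have b3: "- S1 < real n * aa" using a3 by (simp add: S1_def sum_subtractf sum_negf)
      have "\<bar>S1 / real n\<bar> < aa" using b2 b3 n by (simp add: abs_less_iff field_simps)
      then have "(S1 / real n)\<^sup>2 < aa\<^sup>2"
        by (metis abs_ge_zero power2_abs power_strict_mono zero_less_numeral)
      also have "aa\<^sup>2 = \<delta>/4" using dpos by (simp add: aa_def power_divide)
      finally have c: "(S1 / real n)\<^sup>2 < \<delta>/4" .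
      have "Vn n \<omega> = S2 / real n - (S1 / real n)\<^sup>2"
        unfolding S1_def S2_def by (rule var_identity[OF n])
      moreover have "3*\<delta>/4 < S2 / real n" using b1 n by (simp add: field_simps)
      ultimately have "\<delta>/2 < Vn n \<omega>" using c by linarith
      then show False using w by simp
    qed
  qed
  have m1: "E1 \<in> events" unfolding E1_def by measurable
  have m2: "E2 \<in> events" unfolding E2_def by measurable
  have m3: "E3 \<in> events" unfolding E3_def by measurable
  have "prob {\<omega>\<in>space M. Vn n \<omega> < \<delta>/2} \<le> prob (E1 \<union> E2 \<union> E3)"
    using sub m1 m2 m3 by (intro finite_measure_mono) auto
  also have "\<dots> \<le> prob (E1 \<union> E2) + prob E3"
    using m1 m2 m3 by (intro measure_subadditive) auto
  also have "prob (E1 \<union> E2) \<le> prob E1 + prob E2"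
    using m1 m2 by (intro measure_subadditive) auto
  finally show ?thesis using p1 p2 p3 by simp
qed

end

context rowseq
begin

definition "Kbound m = (8/\<delta>)^m * Mm m + fact m / c1^m + 2 * (fact m / c2^m)"

lemma Z_pow_int:
  assumes n: "0 < n"
  shows "integrable M (\<lambda>\<omega>. (zv n (\<lambda>j. X j \<omega>) i) ^ q)"
proof (rule integrable_const_bound[where B="sqrt (real n) ^ q"])
  show "AE \<omega> in M. norm (zv n (\<lambda>j. X j \<omega>) i ^ q) \<le> sqrt (real n) ^ q"
  proof (intro AE_I2)
    fix \<omega>
    have "\<bar>zv n (\<lambda>j. X j \<omega>) i\<bar> ^ q \<le> sqrt (real n) ^ q"
      by (rule power_mono[OF zv_abs_le abs_ge_zero])
    then show "norm (zv n (\<lambda>j. X j \<omega>) i ^ q) \<le> sqrt (real n) ^ q" by (simp add: power_abs)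
  qed
  have "(\<lambda>\<omega>. zv n (\<lambda>j. X j \<omega>)) \<in> measurable M (Pi\<^sub>M UNIV (\<lambda>_. borel))" by measurable
  then have "(\<lambda>\<omega>. zv n (\<lambda>j. X j \<omega>) i) \<in> borel_measurable M"
    by (rule measurable_compose[OF _ measurable_component_singleton]) auto
  then show "(\<lambda>\<omega>. zv n (\<lambda>j. X j \<omega>) i ^ q) \<in> borel_measurable M" by measurable
qed

lemma moment_bound:
  assumes n: "0 < n"
  shows "(\<integral>\<omega>. (zv n (\<lambda>j. X j \<omega>) 0) ^ (2*m) \<partial>M) \<le> Kbound m"
proof -
  let ?Z = "\<lambda>\<omega>. zv n (\<lambda>j. X j \<omega>) 0"
  let ?S = "{\<omega>\<in>space M. Vn n \<omega> < \<delta>/2}"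
  define a1 where "a1 = (2/\<delta>)^m * (4^m/2)"
  have a1: "0 \<le> a1" using dpos by (simp add: a1_def)
  let ?R = "\<lambda>\<omega>. a1 * (X 0 \<omega> - \<mu>)^(2*m) + a1 * ((\<Sum>j<n. (X j \<omega> - \<mu>)^(2*m)) / real n)
      + real n ^ m * indicator ?S \<omega>"
  have Sm: "?S \<in> events" by measurable
  have pw: "?Z \<omega> ^ (2*m) \<le> ?R \<omega>" if w: "\<omega> \<in> space M" for \<omega>
  proof -
    define xb where "xb = (\<Sum>l<n. X l \<omega>) / real n"
    have Zeq: "?Z \<omega> = (X 0 \<omega> - xb) / sqrt (Vn n \<omega>)" using n by (simp add: zv_def xb_def)
    have nn1: "0 \<le> a1 * (X 0 \<omega> - \<mu>)^(2*m) + a1 * ((\<Sum>j<n. (X j \<omega> - \<mu>)^(2*m)) / real n)"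
      using a1 by (intro add_nonneg_nonneg mult_nonneg_nonneg divide_nonneg_nonneg sum_nonneg)
                  (auto simp: zero_le_even_power)
    have ZZ: "?Z \<omega> ^ (2*m) = ((?Z \<omega>)\<^sup>2) ^ m" by (simp add: power_mult)
    show ?thesis
    proof (cases "Vn n \<omega> < \<delta>/2")
      case True
      then have "indicator ?S \<omega> = (1::real)" using w by simp
      moreover have "((?Z \<omega>)\<^sup>2) ^ m \<le> real n ^ m"
        by (rule power_mono[OF zv_sq_le]) simp
      ultimately show ?thesis using nn1 ZZ by simp
    next
      case False
      then have Vp: "\<delta>/2 \<le> Vn n \<omega>" by simp
      then have Vpos: "0 < Vn n \<omega>" using dpos by linarith
      define v where "v = Vn n \<omega>"
      have vp: "\<delta>/2 \<le> v" "0 < v" using Vp Vpos by (auto simp: v_def)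
      have "(?Z \<omega>)\<^sup>2 = (X 0 \<omega> - xb)\<^sup>2 / v"
        using vp by (simp add: Zeq power_divide v_def)
      also have "\<dots> \<le> (X 0 \<omega> - xb)\<^sup>2 / (\<delta>/2)"
        by (rule divide_left_mono) (use vp dpos in auto)
      also have "\<dots> = (2/\<delta>) * (X 0 \<omega> - xb)\<^sup>2" by simp
      finally have z2: "(?Z \<omega>)\<^sup>2 \<le> (2/\<delta>) * (X 0 \<omega> - xb)\<^sup>2" .
      have "((?Z \<omega>)\<^sup>2) ^ m \<le> ((2/\<delta>) * (X 0 \<omega> - xb)\<^sup>2) ^ m"
        by (rule power_mono[OF z2]) simp
      also have "\<dots> = (2/\<delta>)^m * (X 0 \<omega> - xb) ^ (2*m)"
        by (simp only: power_mult_distrib power_mult)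
      also have "(X 0 \<omega> - xb) ^ (2*m) = ((X 0 \<omega> - \<mu>) - (xb - \<mu>)) ^ (2*m)" by simp
      also have "\<dots> \<le> 4^m/2 * ((X 0 \<omega> - \<mu>) ^ (2*m) + (xb - \<mu>) ^ (2*m))" by (rule two_pt)
      also have "(xb - \<mu>) = (\<Sum>j<n. X j \<omega> - \<mu>) / real n"
        using n by (simp add: xb_def sum_subtractf field_simps)
      also have "((\<Sum>j<n. X j \<omega> - \<mu>) / real n) ^ (2*m) \<le> (\<Sum>j<n. (X j \<omega> - \<mu>) ^ (2*m)) / real n"
        by (rule jensen_avg[OF n])
      finally have "((?Z \<omega>)\<^sup>2) ^ m \<le> (2/\<delta>)^m * (4^m/2 * ((X 0 \<omega> - \<mu>) ^ (2*m) + (\<Sum>j<n. (X j \<omega> - \<mu>) ^ (2*m)) / real n))"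
        using dpos by (simp add: mult_left_mono)
      then have "?Z \<omega> ^ (2*m) \<le> a1 * (X 0 \<omega> - \<mu>)^(2*m) + a1 * ((\<Sum>j<n. (X j \<omega> - \<mu>)^(2*m)) / real n)"
        unfolding ZZ a1_def by (simp add: algebra_simps)
      moreover have "0 \<le> real n ^ m * indicator ?S \<omega>" by simp
      ultimately show ?thesis by linarith
    qed
  qed
  have iS: "integrable M (\<lambda>\<omega>. indicator ?S \<omega> :: real)"
    by (rule integrable_const_bound[where B=1]) (auto intro!: AE_I2 simp: indicator_def Sm)
  have isum: "integrable M (\<lambda>\<omega>. \<Sum>j<n. (X j \<omega> - \<mu>)^(2*m))"
    by (rule Bochner_Integration.integrable_sum) (rule pow_int)
  have iR: "integrable M ?R"
    using pow_int[of 0 m] isum iS by simp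
  have "(\<integral>\<omega>. ?Z \<omega> ^ (2*m) \<partial>M) \<le> (\<integral>\<omega>. ?R \<omega> \<partial>M)"
    by (rule integral_mono_AE[OF Z_pow_int[OF n] iR]) (use pw in \<open>auto intro!: AE_I2\<close>)
  also have "\<dots> = a1 * (\<integral>\<omega>. (X 0 \<omega> - \<mu>)^(2*m) \<partial>M) + a1 * ((\<Sum>j<n. \<integral>\<omega>. (X j \<omega> - \<mu>)^(2*m) \<partial>M) / real n)
      + real n ^ m * prob ?S"
    using pow_int[of 0 m] isum iS pow_int[of _ m] Sm
    by (simp add: integral_sum[symmetric])
  also have "\<dots> \<le> a1 * Mm m + a1 * Mm m + real n ^ m * (exp (- c1) ^ n + 2 * exp (- c2) ^ n)"
  proof -
    have "(\<Sum>j<n. \<integral>\<omega>. (X j \<omega> - \<mu>)^(2*m) \<partial>M) \<le> (\<Sum>j<n. Mm m)"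
      by (intro sum_mono pow_le)
    then have "(\<Sum>j<n. \<integral>\<omega>. (X j \<omega> - \<mu>)^(2*m) \<partial>M) / real n \<le> Mm m"
      using n by (simp add: field_simps)
    then show ?thesis using a1 pow_le[of 0 m] tail_bound[OF n]
      by (intro add_mono mult_left_mono) auto
  qed
  also have "\<dots> \<le> Kbound m"
  proof -
    have e1: "real n ^ m * exp (- c1) ^ n \<le> fact m / c1^m"
      using pow_exp_decay[OF c1_pos, of n m] by (simp add: exp_of_nat_mult[symmetric] mult.commute)
    have e2: "real n ^ m * exp (- c2) ^ n \<le> fact m / c2^m"
      using pow_exp_decay[OF c2_pos, of n m] by (simp add: exp_of_nat_mult[symmetric] mult.commute)
    have "a1 * Mm m + a1 * Mm m = (8/\<delta>)^m * Mm m"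
      by (simp add: a1_def power_mult_distrib[symmetric] field_simps)
    moreover have "real n ^ m * (exp (- c1) ^ n + 2 * exp (- c2) ^ n)
        = real n ^ m * exp (- c1) ^ n + 2 * (real n ^ m * exp (- c2) ^ n)" by (simp add: algebra_simps)
    ultimately show ?thesis using e1 e2 unfolding Kbound_def by linarith
  qed
  finally show ?thesis .
qed

end

definition mon4 :: "nat \<Rightarrow> nat \<Rightarrow> nat \<Rightarrow> nat \<Rightarrow> (nat \<Rightarrow> real) \<Rightarrow> real" where
  "mon4 a b c d w = w 0 ^ a * w 1 ^ b * w 2 ^ c * w 3 ^ d"

lemma mon4_measurable[measurable]: "mon4 a b c d \<in> borel_measurable (Pi\<^sub>M UNIV (\<lambda>_. borel))"
  unfolding mon4_def by measurable

lemma mon4_bound: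
  assumes "\<And>i. \<bar>w i\<bar> \<le> s"
  shows "\<bar>mon4 a b c d w\<bar> \<le> s ^ (a + b + c + d)"
proof -
  have p: "\<bar>w i ^ e\<bar> \<le> s ^ e" for i e
    unfolding power_abs by (rule power_mono[OF assms abs_ge_zero])
  have "\<bar>mon4 a b c d w\<bar> = \<bar>w 0 ^ a\<bar> * \<bar>w 1 ^ b\<bar> * \<bar>w 2 ^ c\<bar> * \<bar>w 3 ^ d\<bar>"
    by (simp add: mon4_def abs_mult)
  also have "\<dots> \<le> s ^ a * s ^ b * s ^ c * s ^ d"
  proof -
    have s0: "0 \<le> s" using assms[of 0] by linarith
    show ?thesis by (intro mult_mono p) (auto intro!: mult_nonneg_nonneg zero_le_power s0)
  qed
  also have "\<dots> = s ^ (a + b + c + d)" by (simp add: power_add)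
  finally show ?thesis .
qed

lemma mon4_shift:
  "mon4 a b c d w * w 0 = mon4 (Suc a) b c d w"
  "mon4 a b c d w * w 1 = mon4 a (Suc b) c d w"
  "mon4 a b c d w * w 2 = mon4 a b (Suc c) d w"
  "mon4 a b c d w * w 3 = mon4 a b c (Suc d) w"
  "mon4 a b c d w * (w 0)\<^sup>2 = mon4 (a+2) b c d w"
  "mon4 a b c d w * (w 1)\<^sup>2 = mon4 a (b+2) c d w"
  by (simp_all add: mon4_def power_add algebra_simps power2_eq_square)

lemma mon4_shiftS:
  "mon4 a b c d w * w (Suc 0) = mon4 a (Suc b) c d w"
  "mon4 a b c d w * w (Suc (Suc 0)) = mon4 a b (Suc c) d w"
  "mon4 a b c d w * w (Suc (Suc (Suc 0))) = mon4 a b c (Suc d) w"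
  "mon4 a b c d w * (w (Suc 0))\<^sup>2 = mon4 a (Suc (Suc b)) c d w"
  "mon4 a b c d w * (w 0)\<^sup>2 = mon4 (Suc (Suc a)) b c d w"
  by (simp_all add: mon4_def power_add algebra_simps power2_eq_square numeral_2_eq_2 numeral_3_eq_3)

lemma mon4_swap01: "mon4 a b c d (w \<circ> Transposition.transpose 0 1) = mon4 b a c d w"
  by (simp add: mon4_def transpose_def algebra_simps)
lemma mon4_swap02: "mon4 a b c d (w \<circ> Transposition.transpose 0 2) = mon4 c b a d w"
  by (simp add: mon4_def transpose_def algebra_simps)
lemma mon4_swap12: "mon4 a b c d (w \<circ> Transposition.transpose 1 2) = mon4 a c b d w"
  by (simp add: mon4_def transpose_def algebra_simps)

context rowseq
begin

definition "EM n a b c d = (\<integral>\<omega>. mon4 a b c d (zv n (\<lambda>j. X j \<omega>)) \<partial>M)"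

lemma Zv_meas: "(\<lambda>\<omega>. zv n (\<lambda>j. X j \<omega>)) \<in> measurable M (Pi\<^sub>M UNIV (\<lambda>_. borel))"
  by measurable

lemma mon4_Z_bound: "\<bar>mon4 a b c d (zv n (\<lambda>j. X j \<omega>))\<bar> \<le> sqrt (real n) ^ (a+b+c+d)"
  by (rule mon4_bound) (rule zv_abs_le)

lemma lin_gen:
  assumes rn: "r < n" and r4: "r \<le> 3"
    and e: "r \<le> 0 \<Longrightarrow> a = 0" "r \<le> 1 \<Longrightarrow> b = 0" "r \<le> 2 \<Longrightarrow> c = 0" "d = 0"
  shows "(\<Sum>j<r. \<integral>\<omega>. mon4 a b c d (zv n (\<lambda>j. X j \<omega>)) * zv n (\<lambda>j. X j \<omega>) j \<partial>M)
     + real (n - r) * (\<integral>\<omega>. mon4 a b c d (zv n (\<lambda>j. X j \<omega>)) * zv n (\<lambda>j. X j \<omega>) r \<partial>M) = 0"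
proof -
  have loc: "mon4 a b c d w = mon4 a b c d w'" if h: "\<And>i. i < r \<Longrightarrow> w i = w' i" for w w'
  proof -
    have "w 0 ^ a = w' 0 ^ a" using h[of 0] e(1) by (cases "r \<le> 0") auto
    moreover have "w 1 ^ b = w' 1 ^ b" using h[of 1] e(2) by (cases "r \<le> 1") auto
    moreover have "w 2 ^ c = w' 2 ^ c" using h[of 2] e(3) by (cases "r \<le> 2") auto
    moreover have "w 3 ^ d = w' 3 ^ d" using e(4) by simp
    ultimately show ?thesis by (simp add: mon4_def)
  qed
  have "(\<Sum>j<r. \<integral>\<omega>. mon4 a b c d (zv n (\<lambda>j. X j \<omega>)) * (\<lambda>x. x) (zv n (\<lambda>j. X j \<omega>) j) \<partial>M)
     + real (n - r) * (\<integral>\<omega>. mon4 a b c d (zv n (\<lambda>j. X j \<omega>)) * (\<lambda>x. x) (zv n (\<lambda>j. X j \<omega>) r) \<partial>M)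
     = 0 * (\<integral>\<omega>. mon4 a b c d (zv n (\<lambda>j. X j \<omega>)) \<partial>M)"
  proof (rule sum_split_identity[OF rv ind ident rn mon4_measurable])
    show "mon4 a b c d w = mon4 a b c d w'" if "\<And>i. i < r \<Longrightarrow> w i = w' i" for w w'
      using loc that by blast
    show "\<bar>mon4 a b c d (zv n (\<lambda>j. X j \<omega>))\<bar> \<le> sqrt (real n) ^ (a+b+c+d)" for \<omega>
      by (rule mon4_Z_bound)
    show "\<bar>zv n (\<lambda>j. X j \<omega>) j\<bar> \<le> sqrt (real n)" for \<omega> j by (rule zv_abs_le)
    show "AE \<omega> in M. (\<Sum>j<n. zv n (\<lambda>j. X j \<omega>) j) = 0" by (simp add: zv_sum0)
  qed simp
  then show ?thesis by simp
qed

lemma sq_gen: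
  assumes rn: "r < n" and r1: "r \<le> 1"
    and e: "r \<le> 0 \<Longrightarrow> a = 0" "b = 0" "c = 0" "d = 0"
    and pos: "AE \<omega> in M. 0 < Vn n \<omega>"
  shows "(\<Sum>j<r. \<integral>\<omega>. mon4 a b c d (zv n (\<lambda>j. X j \<omega>)) * (zv n (\<lambda>j. X j \<omega>) j)\<^sup>2 \<partial>M)
     + real (n - r) * (\<integral>\<omega>. mon4 a b c d (zv n (\<lambda>j. X j \<omega>)) * (zv n (\<lambda>j. X j \<omega>) r)\<^sup>2 \<partial>M)
     = real n * (\<integral>\<omega>. mon4 a b c d (zv n (\<lambda>j. X j \<omega>)) \<partial>M)"
proof (rule sum_split_identity[OF rv ind ident rn mon4_measurable])
  show "mon4 a b c d w = mon4 a b c d w'" if h: "\<And>i. i < r \<Longrightarrow> w i = w' i" for w w'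
  proof -
    have "w 0 ^ a = w' 0 ^ a" using h[of 0] e(1) by (cases "r \<le> 0") auto
    then show ?thesis using e by (simp add: mon4_def)
  qed
  show "\<bar>mon4 a b c d (zv n (\<lambda>j. X j \<omega>))\<bar> \<le> sqrt (real n) ^ (a+b+c+d)" for \<omega>
    by (rule mon4_Z_bound)
  show "\<bar>(zv n (\<lambda>j. X j \<omega>) j)\<^sup>2\<bar> \<le> real n" for \<omega> j using zv_sq_le by simp
  show "AE \<omega> in M. (\<Sum>j<n. (zv n (\<lambda>j. X j \<omega>) j)\<^sup>2) = real n"
    using pos by eventually_elim (rule zv_sumsq)
qed simp

lemma swap_gen:
  assumes ab: "a' < n" "b' < n"
    and sw: "\<And>w. mon4 a b c d (w \<circ> Transposition.transpose a' b') = mon4 p q r s w"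
  shows "EM n p q r s = EM n a b c d"
proof -
  have n: "0 < n" using ab by simp
  have tp: "Transposition.transpose a' b' permutes {..<n}" using ab by (intro permutes_swap_id) auto
  have "(\<integral>\<omega>. mon4 a b c d (zv n (\<lambda>j. X j \<omega>) \<circ> Transposition.transpose a' b') \<partial>M)
      = (\<integral>\<omega>. mon4 a b c d (zv n (\<lambda>j. X j \<omega>)) \<partial>M)"
    by (rule exch_zv[OF rv ind ident tp n mon4_measurable])
  then show ?thesis unfolding EM_def sw .
qed

end

lemma div_bound:
  fixes Q T Bt :: real
  assumes eq: "real (n - r) * Q = T" and T: "\<bar>T\<bar> \<le> Bt" and r: "r \<le> 3" and n: "4 \<le> n"
  shows "\<bar>Q\<bar> \<le> 4 * Bt / real n"
proof -
  have nr: "real n / 4 \<le> real (n - r)" using r n by (simp add: of_nat_diff)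
  have np: "0 < real n" using n by simp
  have "real n / 4 * \<bar>Q\<bar> \<le> real (n - r) * \<bar>Q\<bar>" by (rule mult_right_mono[OF nr]) simp
  also have "\<dots> = \<bar>T\<bar>" using eq[symmetric] by (simp add: abs_mult)
  also have "\<dots> \<le> Bt" by (rule T)
  finally show ?thesis using np by (simp add: field_simps)
qed

lemma amgm_abs: "\<bar>x * y\<bar> \<le> (x\<^sup>2 + y\<^sup>2) / 2" for x y :: real
proof -
  have "0 \<le> (\<bar>x\<bar> - \<bar>y\<bar>)\<^sup>2" by simp
  then show ?thesis by (simp add: power2_eq_square algebra_simps abs_mult)
qed

context rowseq
begin

lemma EM_int: "integrable M (\<lambda>\<omega>. mon4 a b c d (zv n (\<lambda>j. X j \<omega>)))"
  by (rule integrable_const_bound[where B="sqrt (real n) ^ (a+b+c+d)"])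
     (use mon4_Z_bound Zv_meas in auto)

lemma EM_amgm:
  assumes "\<And>w. \<bar>mon4 a b c d w\<bar> \<le> (mon4 p q r s w + mon4 p' q' r' s' w) / 2"
  shows "\<bar>EM n a b c d\<bar> \<le> (EM n p q r s + EM n p' q' r' s') / 2"
proof -
  have "\<bar>EM n a b c d\<bar> \<le> (\<integral>\<omega>. \<bar>mon4 a b c d (zv n (\<lambda>j. X j \<omega>))\<bar> \<partial>M)"
    unfolding EM_def by (rule integral_abs_bound)
  also have "\<dots> \<le> (\<integral>\<omega>. (mon4 p q r s (zv n (\<lambda>j. X j \<omega>)) + mon4 p' q' r' s' (zv n (\<lambda>j. X j \<omega>))) / 2 \<partial>M)"
    by (rule integral_mono) (use EM_int assms in auto)
  also have "\<dots> = (EM n p q r s + EM n p' q' r' s') / 2"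
    unfolding EM_def using EM_int by simp
  finally show ?thesis .
qed

lemma id1: "1 < n \<Longrightarrow> EM n (Suc a) 0 0 0 + real (n-1) * EM n a 1 0 0 = 0"
  using lin_gen[of 1 n a 0 0 0] by (simp add: mon4_shift mon4_shiftS EM_def One_nat_def)

lemma id2: "2 < n \<Longrightarrow> EM n (Suc a) b 0 0 + EM n a (Suc b) 0 0 + real (n-2) * EM n a b 1 0 = 0"
  using lin_gen[of 2 n a b 0 0] by (simp add: mon4_shift mon4_shiftS EM_def numeral_2_eq_2 One_nat_def)

lemma id3: "3 < n \<Longrightarrow> EM n (Suc a) b c 0 + EM n a (Suc b) c 0 + EM n a b (Suc c) 0 + real (n-3) * EM n a b c 1 = 0"
  using lin_gen[of 3 n a b c 0] by (simp add: mon4_shift mon4_shiftS EM_def numeral_3_eq_3 numeral_2_eq_2 One_nat_def add.assoc)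

lemma EM0: "EM n 0 0 0 0 = 1"
  by (simp add: EM_def mon4_def prob_space)

lemma sum1: "(\<Sum>j<(1::nat). f j) = f 0" by simp

lemma sq0: "0 < n \<Longrightarrow> AE \<omega> in M. 0 < Vn n \<omega> \<Longrightarrow> EM n 2 0 0 0 = 1"
proof -
  assume n: "0 < n" and pos: "AE \<omega> in M. 0 < Vn n \<omega>"
  have "real n * EM n 2 0 0 0 = real n * EM n 0 0 0 0"
    using sq_gen[of 0 n 0 0 0 0, OF n _ _ _ _ _ pos] unfolding EM_def
    by (simp only: mon4_shift lessThan_0 sum.empty add_0_left diff_zero order_refl simp_thms)
  then show ?thesis using n EM0[of n] by simp
qed

lemma sq1: "1 < n \<Longrightarrow> AE \<omega> in M. 0 < Vn n \<omega> \<Longrightarrow> EM n (a+2) 0 0 0 + real (n-1) * EM n a 2 0 0 = real n * EM n a 0 0 0"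
proof -
  assume n: "1 < n" and pos: "AE \<omega> in M. 0 < Vn n \<omega>"
  show ?thesis
    using sq_gen[of 1 n a 0 0 0, OF n _ _ _ _ _ pos] unfolding EM_def
    by (simp only: mon4_shift sum1 add_0_left order_refl simp_thms)
qed

lemma mom: "0 < n \<Longrightarrow> EM n (2*m) 0 0 0 \<le> Kbound m"
  using moment_bound[of n m] by (simp add: EM_def mon4_def)

lemma mom_nonneg: "0 \<le> EM n (2*m) 0 0 0"
  unfolding EM_def mon4_def by (intro integral_nonneg_AE) (simp add: zero_le_even_power)

lemma mom1: "1 < n \<Longrightarrow> EM n 0 (2*m) 0 0 = EM n (2*m) 0 0 0"
  by (rule swap_gen[of 0 n 1 "2*m" 0 0 0]) (auto simp: mon4_def transpose_def)

end

lemma amgm_22: "\<bar>mon4 2 2 0 0 w\<bar> \<le> (mon4 4 0 0 0 w + mon4 0 4 0 0 w) / 2"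
proof -
  have "\<bar>w 0 ^ 2 * w 1 ^ 2\<bar> \<le> ((w 0 ^ 2)\<^sup>2 + (w 1 ^ 2)\<^sup>2) / 2" by (rule amgm_abs)
  then show ?thesis by (simp add: mon4_def flip: power_mult)
qed

lemma amgm_33: "\<bar>mon4 3 3 0 0 w\<bar> \<le> (mon4 6 0 0 0 w + mon4 0 6 0 0 w) / 2"
proof -
  have "\<bar>w 0 ^ 3 * w 1 ^ 3\<bar> \<le> ((w 0 ^ 3)\<^sup>2 + (w 1 ^ 3)\<^sup>2) / 2" by (rule amgm_abs)
  then show ?thesis by (simp add: mon4_def flip: power_mult)
qed

lemma amgm_42: "\<bar>mon4 4 2 0 0 w\<bar> \<le> (mon4 8 0 0 0 w + mon4 0 4 0 0 w) / 2"
proof -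
  have "\<bar>w 0 ^ 4 * w 1 ^ 2\<bar> \<le> ((w 0 ^ 4)\<^sup>2 + (w 1 ^ 2)\<^sup>2) / 2" by (rule amgm_abs)
  then show ?thesis by (simp add: mon4_def flip: power_mult)
qed

context rowseq
begin

lemma momk: "0 < n \<Longrightarrow> 0 \<le> EM n (2*m) 0 0 0 \<and> EM n (2*m) 0 0 0 \<le> Kbound m"
  using mom[of n m] mom_nonneg[of n m] by simp

lemma em_bounds:
  assumes n: "4 \<le> n"
  shows "\<bar>EM n 3 1 0 0\<bar> \<le> 4 * (Kbound 2) / real n"
    and "\<bar>EM n 2 1 1 0\<bar> \<le> 4 * (2 * (Kbound 2)) / real n"
    and "\<bar>EM n 1 1 1 1\<bar> \<le> 96 * (Kbound 2) / (real n)\<^sup>2"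
    and "\<bar>EM n 5 1 0 0\<bar> \<le> 4 * (Kbound 3) / real n"
    and "\<bar>EM n 3 3 0 0\<bar> \<le> (Kbound 3)"
    and "\<bar>EM n 4 2 0 0\<bar> \<le> ((Kbound 4) + (Kbound 2)) / 2"
    and "\<bar>EM n 4 1 1 0\<bar> \<le> (4 * (Kbound 3 + (Kbound 4 + Kbound 2) / 2)) / real n"
    and "\<bar>EM n 3 2 1 0\<bar> \<le> (4 * (Kbound 3 + (Kbound 4 + Kbound 2) / 2)) / real n"
    and "\<bar>EM n 3 1 1 1\<bar> \<le> 12 * (4 * (Kbound 3 + (Kbound 4 + Kbound 2) / 2)) / (real n)\<^sup>2"
proof -
  have n0: "0 < n" "1 < n" "2 < n" "3 < n" using n by auto
  have np: "0 < real n" using n by simp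
  have m4: "0 \<le> EM n 4 0 0 0" "EM n 4 0 0 0 \<le> (Kbound 2)" using momk[OF n0(1), of 2] by simp_all
  have m6: "0 \<le> EM n 6 0 0 0" "EM n 6 0 0 0 \<le> (Kbound 3)" using momk[OF n0(1), of 3] by simp_all
  have m8: "0 \<le> EM n 8 0 0 0" "EM n 8 0 0 0 \<le> (Kbound 4)" using momk[OF n0(1), of 4] by simp_all
  have m04: "EM n 0 4 0 0 = EM n 4 0 0 0" using mom1[OF n0(2), of 2] by simp
  have m06: "EM n 0 6 0 0 = EM n 6 0 0 0" using mom1[OF n0(2), of 3] by simp
  have B2p: "0 \<le> (Kbound 2)" using m4 by linarith
  have B3p: "0 \<le> (Kbound 3)" using m6 by linarith
  have B4p: "0 \<le> (Kbound 4)" using m8 by linarith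
  have ninv: "4 / real n \<le> 1" using n by simp
  have i4: "\<bar>EM n 3 1 0 0\<bar> \<le> 4 * (Kbound 2) / real n"
  proof (rule div_bound[of n 1 _ "- EM n 4 0 0 0"])
    show "real (n - 1) * EM n 3 1 0 0 = - EM n 4 0 0 0" using id1[OF n0(2), of 3] by (simp add: eval_nat_numeral)
  qed (use m4 n in auto)
  have i4': "\<bar>EM n 3 1 0 0\<bar> \<le> (Kbound 2)"
  proof -
    have "4 * (Kbound 2) / real n \<le> (Kbound 2)" using B2p ninv mult_right_mono[OF ninv B2p] by simp
    then show ?thesis using i4 by linarith
  qed
  have e22: "\<bar>EM n 2 2 0 0\<bar> \<le> (Kbound 2)"
    using EM_amgm[of 2 2 0 0 4 0 0 0 0 4 0 0 n, OF amgm_22] m04 m4 by simp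
  have i5: "\<bar>EM n 2 1 1 0\<bar> \<le> 4 * (2 * (Kbound 2)) / real n"
  proof (rule div_bound[of n 2 _ "- EM n 3 1 0 0 - EM n 2 2 0 0"])
    show "real (n - 2) * EM n 2 1 1 0 = - EM n 3 1 0 0 - EM n 2 2 0 0"
      using id2[OF n0(3), of 2 1] by (simp add: eval_nat_numeral algebra_simps)
  qed (use i4' e22 n in auto)
  have s1: "EM n 1 2 1 0 = EM n 2 1 1 0"
    by (rule swap_gen[of 0 n 1 2 1 1 0]) (use n in \<open>auto simp: mon4_def transpose_def\<close>)
  have s2: "EM n 1 1 2 0 = EM n 2 1 1 0"
    by (rule swap_gen[of 0 n 2 2 1 1 0]) (use n in \<open>auto simp: mon4_def transpose_def\<close>)
  have i6: "\<bar>EM n 1 1 1 1\<bar> \<le> 96 * (Kbound 2) / (real n)\<^sup>2"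
  proof -
    have "\<bar>EM n 1 1 1 1\<bar> \<le> 4 * (3 * (4 * (2 * (Kbound 2)) / real n)) / real n"
    proof (rule div_bound[of n 3 _ "- 3 * EM n 2 1 1 0"])
      show "real (n - 3) * EM n 1 1 1 1 = - 3 * EM n 2 1 1 0"
        using id3[OF n0(4), of 1 1 1] s1 s2 by (simp add: eval_nat_numeral algebra_simps)
    qed (use i5 n in auto)
    then show ?thesis by (simp add: power2_eq_square field_simps)
  qed
  have i7: "\<bar>EM n 5 1 0 0\<bar> \<le> 4 * (Kbound 3) / real n"
  proof (rule div_bound[of n 1 _ "- EM n 6 0 0 0"])
    show "real (n - 1) * EM n 5 1 0 0 = - EM n 6 0 0 0" using id1[OF n0(2), of 5] by (simp add: eval_nat_numeral)
  qed (use m6 n in auto)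
  have i7': "\<bar>EM n 5 1 0 0\<bar> \<le> (Kbound 3)"
  proof -
    have "4 * (Kbound 3) / real n \<le> (Kbound 3)" using B3p mult_right_mono[OF ninv B3p] by simp
    then show ?thesis using i7 by linarith
  qed
  have i8: "\<bar>EM n 3 3 0 0\<bar> \<le> (Kbound 3)"
    using EM_amgm[of 3 3 0 0 6 0 0 0 0 6 0 0 n, OF amgm_33] m06 m6 by simp
  have i9: "\<bar>EM n 4 2 0 0\<bar> \<le> ((Kbound 4) + (Kbound 2)) / 2"
    using EM_amgm[of 4 2 0 0 8 0 0 0 0 4 0 0 n, OF amgm_42] m04 m4 m8 by simp
  have i9a: "EM n 4 2 0 0 \<le> (Kbound 4 + Kbound 2) / 2" "- EM n 4 2 0 0 \<le> (Kbound 4 + Kbound 2) / 2"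
    using abs_le_D1[OF i9] abs_le_D2[OF i9] by auto
  have i10: "\<bar>EM n 4 1 1 0\<bar> \<le> (4 * (Kbound 3 + (Kbound 4 + Kbound 2) / 2)) / real n"
  proof -
    have "\<bar>EM n 4 1 1 0\<bar> \<le> 4 * ((Kbound 3) + ((Kbound 4) + (Kbound 2)) / 2) / real n"
    proof (rule div_bound[of n 2 _ "- EM n 5 1 0 0 - EM n 4 2 0 0"])
      show "real (n - 2) * EM n 4 1 1 0 = - EM n 5 1 0 0 - EM n 4 2 0 0"
        using id2[OF n0(3), of 4 1] by (simp add: eval_nat_numeral algebra_simps)
        show "\<bar>- EM n 5 1 0 0 - EM n 4 2 0 0\<bar> \<le> Kbound 3 + (Kbound 4 + Kbound 2) / 2"
      using abs_triangle_ineq4[of "- EM n 5 1 0 0" "EM n 4 2 0 0"] i7' i9 unfolding abs_minus_cancel by linarith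
    qed (use n in auto)
    then show ?thesis by simp
  qed
  have i11: "\<bar>EM n 3 2 1 0\<bar> \<le> (4 * (Kbound 3 + (Kbound 4 + Kbound 2) / 2)) / real n"
  proof -
    have "\<bar>EM n 3 2 1 0\<bar> \<le> 4 * ((Kbound 3) + ((Kbound 4) + (Kbound 2)) / 2) / real n"
    proof (rule div_bound[of n 2 _ "- EM n 4 2 0 0 - EM n 3 3 0 0"])
      show "real (n - 2) * EM n 3 2 1 0 = - EM n 4 2 0 0 - EM n 3 3 0 0"
        using id2[OF n0(3), of 3 2] by (simp add: eval_nat_numeral algebra_simps)
        show "\<bar>- EM n 4 2 0 0 - EM n 3 3 0 0\<bar> \<le> Kbound 3 + (Kbound 4 + Kbound 2) / 2"
      using abs_triangle_ineq4[of "- EM n 4 2 0 0" "EM n 3 3 0 0"] i8 i9 unfolding abs_minus_cancel by linarith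
    qed (use n in auto)
    then show ?thesis by simp
  qed
  have s3: "EM n 3 1 2 0 = EM n 3 2 1 0"
    by (rule swap_gen[of 1 n 2 3 2 1 0]) (use n in \<open>auto simp: mon4_def transpose_def\<close>)
  have i12: "\<bar>EM n 3 1 1 1\<bar> \<le> 12 * (4 * (Kbound 3 + (Kbound 4 + Kbound 2) / 2)) / (real n)\<^sup>2"
  proof -
    have "\<bar>EM n 3 1 1 1\<bar> \<le> 4 * (3 * (4 * (Kbound 3 + (Kbound 4 + Kbound 2) / 2)) / real n) / real n"
    proof (rule div_bound[of n 3 _ "- EM n 4 1 1 0 - 2 * EM n 3 2 1 0"])
      show "real (n - 3) * EM n 3 1 1 1 = - EM n 4 1 1 0 - 2 * EM n 3 2 1 0"
        using id3[OF n0(4), of 3 1 1] s3 by (simp add: eval_nat_numeral algebra_simps)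
        have e3: "3 * (4 * (Kbound 3 + (Kbound 4 + Kbound 2) / 2)) / real n = 3 * ((4 * (Kbound 3 + (Kbound 4 + Kbound 2) / 2)) / real n)" by simp
    show "\<bar>- EM n 4 1 1 0 - 2 * EM n 3 2 1 0\<bar> \<le> 3 * (4 * (Kbound 3 + (Kbound 4 + Kbound 2) / 2)) / real n"
      using abs_triangle_ineq4[of "- EM n 4 1 1 0" "2 * EM n 3 2 1 0"] i10 i11 unfolding abs_minus_cancel abs_mult e3 by linarith
    qed (use n in auto)
    then show ?thesis by (simp add: power2_eq_square field_simps)
  qed
  show "\<bar>EM n 3 1 0 0\<bar> \<le> 4 * (Kbound 2) / real n" by (rule i4)
  show "\<bar>EM n 2 1 1 0\<bar> \<le> 4 * (2 * (Kbound 2)) / real n" by (rule i5)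
  show "\<bar>EM n 1 1 1 1\<bar> \<le> 96 * (Kbound 2) / (real n)\<^sup>2" by (rule i6)
  show "\<bar>EM n 5 1 0 0\<bar> \<le> 4 * (Kbound 3) / real n" by (rule i7)
  show "\<bar>EM n 3 3 0 0\<bar> \<le> (Kbound 3)" by (rule i8)
  show "\<bar>EM n 4 2 0 0\<bar> \<le> ((Kbound 4) + (Kbound 2)) / 2" by (rule i9)
  show "\<bar>EM n 4 1 1 0\<bar> \<le> (4 * (Kbound 3 + (Kbound 4 + Kbound 2) / 2)) / real n" by (rule i10)
  show "\<bar>EM n 3 2 1 0\<bar> \<le> (4 * (Kbound 3 + (Kbound 4 + Kbound 2) / 2)) / real n" by (rule i11)
  show "\<bar>EM n 3 1 1 1\<bar> \<le> 12 * (4 * (Kbound 3 + (Kbound 4 + Kbound 2) / 2)) / (real n)\<^sup>2" by (rule i12)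
qed

lemma item1:
  assumes n: "2 \<le> n" and pos: "AE \<omega> in M. 0 < Vn n \<omega>"
  shows "EM n 1 1 0 0 = - 1 / (real n - 1)"
proof -
  have n1: "1 < n" "0 < n" using n by auto
  have h: "EM n 2 0 0 0 + real (n-1) * EM n 1 1 0 0 = 0" using id1[OF n1(1), of 1] by (simp add: eval_nat_numeral)
  have e: "EM n 2 0 0 0 = 1" by (rule sq0[OF n1(2) pos])
  have rn: "real (n - 1) = real n - 1" using n by (simp add: of_nat_diff)
  have np: "real n - 1 \<noteq> 0" using n by simp
  have "EM n 1 1 0 0 * (real n - 1) = - 1" using h e rn by (simp add: mult.commute)
  then show ?thesis using np by (subst eq_divide_eq) simp
qed

lemma item3:
  assumes n: "2 \<le> n" and pos: "AE \<omega> in M. 0 < Vn n \<omega>"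
  shows "\<bar>EM n 2 2 0 0 - 1\<bar> \<le> (1 + Kbound 2) / (real n - 1)"
proof -
  have n1: "1 < n" "0 < n" using n by auto
  have e: "EM n 4 0 0 0 + real (n-1) * EM n 2 2 0 0 = real n * EM n 2 0 0 0"
    using sq1[OF n1(1) pos, of 2] by simp
  have e2: "EM n 2 0 0 0 = 1" by (rule sq0[OF n1(2) pos])
  have m4: "0 \<le> EM n 4 0 0 0" "EM n 4 0 0 0 \<le> Kbound 2" using momk[OF n1(2), of 2] by simp_all
  have rn: "real (n - 1) = real n - 1" using n by (simp add: of_nat_diff)
  have np: "real n - 1 > 0" using n by simp
  have "(EM n 2 2 0 0 - 1) * (real n - 1) = 1 - EM n 4 0 0 0"
  proof -
    have "EM n 4 0 0 0 + (real n - 1) * EM n 2 2 0 0 = real n" using e e2 rn by simp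
    then show ?thesis by (simp add: algebra_simps)
  qed
  then have q: "EM n 2 2 0 0 - 1 = (1 - EM n 4 0 0 0) / (real n - 1)"
    using np by (simp add: eq_divide_eq)
  have "\<bar>1 - EM n 4 0 0 0\<bar> \<le> 1 + Kbound 2" using m4 by linarith
  then have "\<bar>1 - EM n 4 0 0 0\<bar> / (real n - 1) \<le> (1 + Kbound 2) / (real n - 1)"
    using np by (intro divide_right_mono) auto
  then show ?thesis unfolding q using np by (simp add: abs_divide)
qed

end

lemma powr_bound:
  fixes z p :: real assumes p: "1 \<le> p" and m: "p \<le> real (2*m)"
  shows "\<bar>z\<bar> powr p \<le> 1 + z ^ (2*m)"
proof (cases "\<bar>z\<bar> \<le> 1")
  case True
  have "\<bar>z\<bar> powr p \<le> 1" using True p by (intro powr_le1) auto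
  moreover have "0 \<le> z ^ (2*m)" by (simp add: zero_le_even_power)
  ultimately show ?thesis by linarith
next
  case False
  then have "\<bar>z\<bar> powr p \<le> \<bar>z\<bar> powr real (2*m)" using m by (intro powr_mono) auto
  also have "\<dots> = \<bar>z\<bar> ^ (2*m)" using False by (intro powr_realpow) auto
  also have "\<dots> = z ^ (2*m)" by (simp add: power_even_abs)
  finally show ?thesis by simp
qed

theorem proposition1:
  fixes M :: "'a measure" and A :: "nat \<Rightarrow> nat \<Rightarrow> 'a \<Rightarrow> real"
  assumes P: "prob_space M"
    and meas: "\<And>i k. A i k \<in> borel_measurable M"
    and rows_indep: "\<And>k. prob_space.indep_vars M (\<lambda>_. borel) (\<lambda>i. A i k) UNIV"
    and rows_ident: "\<And>i k. distr M borel (A i k) = distr M borel (A 0 k)"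
    and cols_indep: "prob_space.indep_vars M (\<lambda>_. Pi\<^sub>M UNIV (\<lambda>_. borel))
                        (\<lambda>k \<omega>. \<lambda>i. A i k \<omega>) UNIV"
    and s_pos: "\<And>n k. n \<ge> 2 \<Longrightarrow> AE \<omega> in M. col_var A n k \<omega> > 0"
    and A1: "\<exists>d>0. \<exists>C>0. \<exists>\<epsilon>>0. \<forall>t::real. \<bar>t\<bar> < \<epsilon> \<longrightarrow> (\<forall>i j k. i \<noteq> j \<longrightarrow>
       (let m = (\<integral>\<omega>. A 0 k \<omega> \<partial>M); \<sigma>2 = (\<integral>\<omega>. (A 0 k \<omega> - m)\<^sup>2 \<partial>M) in
         (\<integral>\<^sup>+\<omega>. ennreal (exp (t * ((A i k \<omega> - m)\<^sup>2 - \<sigma>2))) \<partial>M) \<le> ennreal (C * exp (d * t\<^sup>2))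
       \<and> (\<integral>\<^sup>+\<omega>. ennreal (exp (t * (A i k \<omega> - m))) \<partial>M) \<le> ennreal (C * exp (d * t\<^sup>2))
       \<and> (\<integral>\<^sup>+\<omega>. ennreal (exp (t * ((A i k \<omega> - m) * (A j k \<omega> - m)))) \<partial>M)
            \<le> ennreal (C * exp (d * t\<^sup>2))))"
    and A2_min: "\<exists>\<delta>>0. \<forall>k. (\<integral>\<omega>. (A 0 k \<omega> - (\<integral>\<omega>. A 0 k \<omega> \<partial>M))\<^sup>2 \<partial>M) \<ge> \<delta>"
    and A2_max: "\<exists>\<Delta>. \<forall>k. (\<integral>\<omega>. (A 0 k \<omega> - (\<integral>\<omega>. A 0 k \<omega> \<partial>M))\<^sup>2 \<partial>M) \<le> \<Delta>"
  shows
    "(\<forall>n\<ge>2. \<forall>k. (\<integral>\<omega>. Zst A n 0 k \<omega> * Zst A n 1 k \<omega> \<partial>M) = - 1 / (real n - 1))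
   \<and> (\<forall>p::real. p \<ge> 1 \<longrightarrow>
        unif_bigO (\<lambda>n k. \<integral>\<omega>. \<bar>Zst A n 0 k \<omega>\<bar> powr p \<partial>M) (\<lambda>n. 1))
   \<and> unif_littleo1 (\<lambda>n k. (\<integral>\<omega>. (Zst A n 0 k \<omega>)^2 * (Zst A n 1 k \<omega>)^2 \<partial>M) - 1)
   \<and> unif_bigO (\<lambda>n k. \<integral>\<omega>. (Zst A n 0 k \<omega>)^3 * Zst A n 1 k \<omega> \<partial>M) (\<lambda>n. 1 / real n)
   \<and> unif_bigO (\<lambda>n k. \<integral>\<omega>. (Zst A n 0 k \<omega>)^2 * Zst A n 1 k \<omega> * Zst A n 2 k \<omega> \<partial>M)
        (\<lambda>n. 1 / real n)
   \<and> unif_bigO (\<lambda>n k. \<integral>\<omega>. Zst A n 0 k \<omega> * Zst A n 1 k \<omega> * Zst A n 2 k \<omega> * Zst A n 3 k \<omega> \<partial>M)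
        (\<lambda>n. 1 / (real n)^2)
   \<and> unif_bigO (\<lambda>n k. \<integral>\<omega>. (Zst A n 0 k \<omega>)^5 * Zst A n 1 k \<omega> \<partial>M) (\<lambda>n. 1 / real n)
   \<and> unif_bigO (\<lambda>n k. \<integral>\<omega>. (Zst A n 0 k \<omega>)^3 * (Zst A n 1 k \<omega>)^3 \<partial>M) (\<lambda>n. 1)
   \<and> unif_bigO (\<lambda>n k. \<integral>\<omega>. (Zst A n 0 k \<omega>)^4 * (Zst A n 1 k \<omega>)^2 \<partial>M) (\<lambda>n. 1)
   \<and> unif_bigO (\<lambda>n k. \<integral>\<omega>. (Zst A n 0 k \<omega>)^4 * Zst A n 1 k \<omega> * Zst A n 2 k \<omega> \<partial>M)
        (\<lambda>n. 1 / real n)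
   \<and> unif_bigO (\<lambda>n k. \<integral>\<omega>. (Zst A n 0 k \<omega>)^3 * (Zst A n 1 k \<omega>)^2 * Zst A n 2 k \<omega> \<partial>M)
        (\<lambda>n. 1 / real n)
   \<and> unif_bigO (\<lambda>n k. \<integral>\<omega>. (Zst A n 0 k \<omega>)^3 * Zst A n 1 k \<omega> * Zst A n 2 k \<omega> * Zst A n 3 k \<omega> \<partial>M)
        (\<lambda>n. 1 / (real n)^2)"
proof -
  interpret P: prob_space M by (rule P)
  obtain d C \<epsilon> where d: "d > 0" and C: "C > 0" and ep: "\<epsilon> > 0"
    and H: "\<forall>t::real. \<bar>t\<bar> < \<epsilon> \<longrightarrow> (\<forall>i j k. i \<noteq> j \<longrightarrow>
       (let m = (\<integral>\<omega>. A 0 k \<omega> \<partial>M); \<sigma>2 = (\<integral>\<omega>. (A 0 k \<omega> - m)\<^sup>2 \<partial>M) in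
         (\<integral>\<^sup>+\<omega>. ennreal (exp (t * ((A i k \<omega> - m)\<^sup>2 - \<sigma>2))) \<partial>M) \<le> ennreal (C * exp (d * t\<^sup>2))
       \<and> (\<integral>\<^sup>+\<omega>. ennreal (exp (t * (A i k \<omega> - m))) \<partial>M) \<le> ennreal (C * exp (d * t\<^sup>2))
       \<and> (\<integral>\<^sup>+\<omega>. ennreal (exp (t * ((A i k \<omega> - m) * (A j k \<omega> - m)))) \<partial>M)
            \<le> ennreal (C * exp (d * t\<^sup>2))))"
    using A1 by blast
  obtain \<delta> where dl: "\<delta> > 0" and dlk: "\<And>k. \<delta> \<le> (\<integral>\<omega>. (A 0 k \<omega> - (\<integral>\<omega>. A 0 k \<omega> \<partial>M))\<^sup>2 \<partial>M)"
    using A2_min by blast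
  define t0 where "t0 = \<epsilon> / 2"
  define Cb where "Cb = C * exp (d * t0\<^sup>2)"
  have t0: "0 < t0" using ep by (simp add: t0_def)
  have Cb: "0 < Cb" using C by (simp add: Cb_def)
  have mgf_nn: "(\<integral>\<^sup>+\<omega>. ennreal (exp (s * (A i k \<omega> - (\<integral>\<omega>. A 0 k \<omega> \<partial>M)))) \<partial>M) \<le> ennreal Cb"
    if s: "s \<in> {t0, -t0}" for s i k
  proof -
    have "\<bar>s\<bar> < \<epsilon>" using s ep by (auto simp: t0_def)
    moreover have "s\<^sup>2 = t0\<^sup>2" using s by auto
    ultimately show ?thesis
      using H[rule_format, of s i "Suc i" k] by (simp add: Let_def Cb_def)
  qed
  have mgf_int: "integrable M (\<lambda>\<omega>. exp (s * (A i k \<omega> - (\<integral>\<omega>. A 0 k \<omega> \<partial>M))))"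
    if s: "s \<in> {t0, -t0}" for s i k
  proof (rule integrableI_nonneg)
    show "(\<lambda>\<omega>. exp (s * (A i k \<omega> - (\<integral>\<omega>. A 0 k \<omega> \<partial>M)))) \<in> borel_measurable M"
      using meas[of i k] by measurable
    show "(\<integral>\<^sup>+\<omega>. ennreal (exp (s * (A i k \<omega> - (\<integral>\<omega>. A 0 k \<omega> \<partial>M)))) \<partial>M) < \<infinity>"
      using mgf_nn[OF s, of i k] by (simp add: le_less_trans)
  qed simp
  have mgf_le: "(\<integral>\<omega>. exp (s * (A i k \<omega> - (\<integral>\<omega>. A 0 k \<omega> \<partial>M))) \<partial>M) \<le> Cb"
    if s: "s \<in> {t0, -t0}" for s i k
  proof -
    have "ennreal (\<integral>\<omega>. exp (s * (A i k \<omega> - (\<integral>\<omega>. A 0 k \<omega> \<partial>M))) \<partial>M) \<le> ennreal Cb"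
      using mgf_nn[OF s, of i k] nn_integral_eq_integral[OF mgf_int[OF s, of i k]] by simp
    then show ?thesis using Cb by (simp add: ennreal_le_iff)
  qed
  have RS: "rowseq M (\<lambda>i. A i k) (\<integral>\<omega>. A 0 k \<omega> \<partial>M) t0 Cb \<delta>" for k
  proof (unfold rowseq_def rowseq_axioms_def, intro conjI allI impI)
    show "prob_space M" by (rule P)
  qed (use meas rows_indep rows_ident t0 Cb dl dlk mgf_int mgf_le in auto)
  define Kb where "Kb m = rowseq.Kbound t0 Cb \<delta> m" for m
  have pos: "AE \<omega> in M. 0 < (\<Sum>j<n. (A j k \<omega> - (\<Sum>l<n. A l k \<omega>) / real n)\<^sup>2) / real n"
    if "2 \<le> n" for n k
    using s_pos[OF that, of k] by (simp add: col_var_def col_mean_def)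
  have conv: "\<And>n k a b c e :: nat. 1 < n \<Longrightarrow> (0 < c \<Longrightarrow> 2 < n) \<Longrightarrow> (0 < e \<Longrightarrow> 3 < n) \<Longrightarrow>
      rowseq.EM M (\<lambda>i. A i k) n a b c e
      = (\<integral>\<omega>. Zst A n 0 k \<omega> ^ a * Zst A n 1 k \<omega> ^ b * Zst A n 2 k \<omega> ^ c * Zst A n 3 k \<omega> ^ e \<partial>M)"
  proof -
    fix n k a b c e :: nat assume n: "1 < n" and cn: "0 < c \<Longrightarrow> 2 < n" and en: "0 < e \<Longrightarrow> 3 < n"
    show "rowseq.EM M (\<lambda>i. A i k) n a b c e
      = (\<integral>\<omega>. Zst A n 0 k \<omega> ^ a * Zst A n 1 k \<omega> ^ b * Zst A n 2 k \<omega> ^ c * Zst A n 3 k \<omega> ^ e \<partial>M)"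
    unfolding rowseq.EM_def[OF RS[of k]] mon4_def
  proof (rule Bochner_Integration.integral_cong[OF refl])
    fix \<omega>
    have h0: "zv n (\<lambda>j. A j k \<omega>) 0 = Zst A n 0 k \<omega>" using n by (simp add: Zst_zv)
    have h1: "zv n (\<lambda>j. A j k \<omega>) 1 = Zst A n 1 k \<omega>" using n by (simp add: Zst_zv)
    have h2: "zv n (\<lambda>j. A j k \<omega>) 2 ^ c = Zst A n 2 k \<omega> ^ c"
      using cn by (cases "c = 0") (auto simp: Zst_zv)
    have h3: "zv n (\<lambda>j. A j k \<omega>) 3 ^ e = Zst A n 3 k \<omega> ^ e"
      using en by (cases "e = 0") (auto simp: Zst_zv)
    show "zv n (\<lambda>j. A j k \<omega>) 0 ^ a * zv n (\<lambda>j. A j k \<omega>) 1 ^ b * zv n (\<lambda>j. A j k \<omega>) 2 ^ c *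
        zv n (\<lambda>j. A j k \<omega>) 3 ^ e = Zst A n 0 k \<omega> ^ a * Zst A n 1 k \<omega> ^ b * Zst A n 2 k \<omega> ^ c * Zst A n 3 k \<omega> ^ e"
      by (simp only: h0 h1 h2 h3)
  qed
  qed
  have L0: "unif_bigO (\<lambda>n k. \<integral>\<omega>. (Zst A n 0 k \<omega>)^3 * Zst A n 1 k \<omega> \<partial>M) (\<lambda>n. 1 / real n)"
    unfolding unif_bigO_def
  proof (intro exI[of _ "4 * Kb 2"] exI[of _ "4::nat"] allI impI)
    fix n k assume n: "(4::nat) \<le> n"
    have cv: "rowseq.EM M (\<lambda>i. A i k) n 3 1 0 0 = (\<integral>\<omega>. (Zst A n 0 k \<omega>)^3 * Zst A n 1 k \<omega> \<partial>M)"
      using conv[of n 0 0 k 3 1] n by simp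
    have bd: "\<bar>rowseq.EM M (\<lambda>i. A i k) n 3 1 0 0\<bar> \<le> 4 * Kb 2 / (real n)"
      using rowseq.em_bounds(1)[OF RS[of k] n] by (simp add: Kb_def)
    show "\<bar>\<integral>\<omega>. (Zst A n 0 k \<omega>)^3 * Zst A n 1 k \<omega> \<partial>M\<bar> \<le> 4 * Kb 2 * (1 / real n)"
      using bd unfolding cv by simp
  qed
  have L1: "unif_bigO (\<lambda>n k. \<integral>\<omega>. (Zst A n 0 k \<omega>)^2 * Zst A n 1 k \<omega> * Zst A n 2 k \<omega> \<partial>M) (\<lambda>n. 1 / real n)"
    unfolding unif_bigO_def
  proof (intro exI[of _ "4 * (2 * Kb 2)"] exI[of _ "4::nat"] allI impI)
    fix n k assume n: "(4::nat) \<le> n"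
    have cv: "rowseq.EM M (\<lambda>i. A i k) n 2 1 1 0 = (\<integral>\<omega>. (Zst A n 0 k \<omega>)^2 * Zst A n 1 k \<omega> * Zst A n 2 k \<omega> \<partial>M)"
      using conv[of n 1 0 k 2 1] n by simp
    have bd: "\<bar>rowseq.EM M (\<lambda>i. A i k) n 2 1 1 0\<bar> \<le> 4 * (2 * Kb 2) / (real n)"
      using rowseq.em_bounds(2)[OF RS[of k] n] by (simp add: Kb_def)
    show "\<bar>\<integral>\<omega>. (Zst A n 0 k \<omega>)^2 * Zst A n 1 k \<omega> * Zst A n 2 k \<omega> \<partial>M\<bar> \<le> 4 * (2 * Kb 2) * (1 / real n)"
      using bd unfolding cv by simp
  qed
  have L2: "unif_bigO (\<lambda>n k. \<integral>\<omega>. Zst A n 0 k \<omega> * Zst A n 1 k \<omega> * Zst A n 2 k \<omega> * Zst A n 3 k \<omega> \<partial>M) (\<lambda>n. 1 / (real n)^2)"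
    unfolding unif_bigO_def
  proof (intro exI[of _ "96 * Kb 2"] exI[of _ "4::nat"] allI impI)
    fix n k assume n: "(4::nat) \<le> n"
    have cv: "rowseq.EM M (\<lambda>i. A i k) n 1 1 1 1 = (\<integral>\<omega>. Zst A n 0 k \<omega> * Zst A n 1 k \<omega> * Zst A n 2 k \<omega> * Zst A n 3 k \<omega> \<partial>M)"
      using conv[of n 1 1 k 1 1] n by simp
    have bd: "\<bar>rowseq.EM M (\<lambda>i. A i k) n 1 1 1 1\<bar> \<le> 96 * Kb 2 / ((real n)^2)"
      using rowseq.em_bounds(3)[OF RS[of k] n] by (simp add: Kb_def)
    show "\<bar>\<integral>\<omega>. Zst A n 0 k \<omega> * Zst A n 1 k \<omega> * Zst A n 2 k \<omega> * Zst A n 3 k \<omega> \<partial>M\<bar> \<le> 96 * Kb 2 * (1 / (real n)^2)"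
      using bd unfolding cv by simp
  qed
  have L3: "unif_bigO (\<lambda>n k. \<integral>\<omega>. (Zst A n 0 k \<omega>)^5 * Zst A n 1 k \<omega> \<partial>M) (\<lambda>n. 1 / real n)"
    unfolding unif_bigO_def
  proof (intro exI[of _ "4 * Kb 3"] exI[of _ "4::nat"] allI impI)
    fix n k assume n: "(4::nat) \<le> n"
    have cv: "rowseq.EM M (\<lambda>i. A i k) n 5 1 0 0 = (\<integral>\<omega>. (Zst A n 0 k \<omega>)^5 * Zst A n 1 k \<omega> \<partial>M)"
      using conv[of n 0 0 k 5 1] n by simp
    have bd: "\<bar>rowseq.EM M (\<lambda>i. A i k) n 5 1 0 0\<bar> \<le> 4 * Kb 3 / (real n)"
      using rowseq.em_bounds(4)[OF RS[of k] n] by (simp add: Kb_def)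
    show "\<bar>\<integral>\<omega>. (Zst A n 0 k \<omega>)^5 * Zst A n 1 k \<omega> \<partial>M\<bar> \<le> 4 * Kb 3 * (1 / real n)"
      using bd unfolding cv by simp
  qed
  have L4: "unif_bigO (\<lambda>n k. \<integral>\<omega>. (Zst A n 0 k \<omega>)^3 * (Zst A n 1 k \<omega>)^3 \<partial>M) (\<lambda>n. 1)"
    unfolding unif_bigO_def
  proof (intro exI[of _ "Kb 3"] exI[of _ "4::nat"] allI impI)
    fix n k assume n: "(4::nat) \<le> n"
    have cv: "rowseq.EM M (\<lambda>i. A i k) n 3 3 0 0 = (\<integral>\<omega>. (Zst A n 0 k \<omega>)^3 * (Zst A n 1 k \<omega>)^3 \<partial>M)"
      using conv[of n 0 0 k 3 3] n by simp
    have bd: "\<bar>rowseq.EM M (\<lambda>i. A i k) n 3 3 0 0\<bar> \<le> Kb 3 / (1)"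
      using rowseq.em_bounds(5)[OF RS[of k] n] by (simp add: Kb_def)
    show "\<bar>\<integral>\<omega>. (Zst A n 0 k \<omega>)^3 * (Zst A n 1 k \<omega>)^3 \<partial>M\<bar> \<le> Kb 3 * (1)"
      using bd unfolding cv by simp
  qed
  have L5: "unif_bigO (\<lambda>n k. \<integral>\<omega>. (Zst A n 0 k \<omega>)^4 * (Zst A n 1 k \<omega>)^2 \<partial>M) (\<lambda>n. 1)"
    unfolding unif_bigO_def
  proof (intro exI[of _ "(Kb 4 + Kb 2) / 2"] exI[of _ "4::nat"] allI impI)
    fix n k assume n: "(4::nat) \<le> n"
    have cv: "rowseq.EM M (\<lambda>i. A i k) n 4 2 0 0 = (\<integral>\<omega>. (Zst A n 0 k \<omega>)^4 * (Zst A n 1 k \<omega>)^2 \<partial>M)"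
      using conv[of n 0 0 k 4 2] n by simp
    have bd: "\<bar>rowseq.EM M (\<lambda>i. A i k) n 4 2 0 0\<bar> \<le> (Kb 4 + Kb 2) / 2 / (1)"
      using rowseq.em_bounds(6)[OF RS[of k] n] by (simp add: Kb_def)
    show "\<bar>\<integral>\<omega>. (Zst A n 0 k \<omega>)^4 * (Zst A n 1 k \<omega>)^2 \<partial>M\<bar> \<le> (Kb 4 + Kb 2) / 2 * (1)"
      using bd unfolding cv by simp
  qed
  have L6: "unif_bigO (\<lambda>n k. \<integral>\<omega>. (Zst A n 0 k \<omega>)^4 * Zst A n 1 k \<omega> * Zst A n 2 k \<omega> \<partial>M) (\<lambda>n. 1 / real n)"
    unfolding unif_bigO_def
  proof (intro exI[of _ "(4 * (Kb 3 + (Kb 4 + Kb 2) / 2))"] exI[of _ "4::nat"] allI impI)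
    fix n k assume n: "(4::nat) \<le> n"
    have cv: "rowseq.EM M (\<lambda>i. A i k) n 4 1 1 0 = (\<integral>\<omega>. (Zst A n 0 k \<omega>)^4 * Zst A n 1 k \<omega> * Zst A n 2 k \<omega> \<partial>M)"
      using conv[of n 1 0 k 4 1] n by simp
    have bd: "\<bar>rowseq.EM M (\<lambda>i. A i k) n 4 1 1 0\<bar> \<le> (4 * (Kb 3 + (Kb 4 + Kb 2) / 2)) / (real n)"
      using rowseq.em_bounds(7)[OF RS[of k] n] by (simp add: Kb_def)
    show "\<bar>\<integral>\<omega>. (Zst A n 0 k \<omega>)^4 * Zst A n 1 k \<omega> * Zst A n 2 k \<omega> \<partial>M\<bar> \<le> (4 * (Kb 3 + (Kb 4 + Kb 2) / 2)) * (1 / real n)"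
      using bd unfolding cv by simp
  qed
  have L7: "unif_bigO (\<lambda>n k. \<integral>\<omega>. (Zst A n 0 k \<omega>)^3 * (Zst A n 1 k \<omega>)^2 * Zst A n 2 k \<omega> \<partial>M) (\<lambda>n. 1 / real n)"
    unfolding unif_bigO_def
  proof (intro exI[of _ "(4 * (Kb 3 + (Kb 4 + Kb 2) / 2))"] exI[of _ "4::nat"] allI impI)
    fix n k assume n: "(4::nat) \<le> n"
    have cv: "rowseq.EM M (\<lambda>i. A i k) n 3 2 1 0 = (\<integral>\<omega>. (Zst A n 0 k \<omega>)^3 * (Zst A n 1 k \<omega>)^2 * Zst A n 2 k \<omega> \<partial>M)"
      using conv[of n 1 0 k 3 2] n by simp
    have bd: "\<bar>rowseq.EM M (\<lambda>i. A i k) n 3 2 1 0\<bar> \<le> (4 * (Kb 3 + (Kb 4 + Kb 2) / 2)) / (real n)"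
      using rowseq.em_bounds(8)[OF RS[of k] n] by (simp add: Kb_def)
    show "\<bar>\<integral>\<omega>. (Zst A n 0 k \<omega>)^3 * (Zst A n 1 k \<omega>)^2 * Zst A n 2 k \<omega> \<partial>M\<bar> \<le> (4 * (Kb 3 + (Kb 4 + Kb 2) / 2)) * (1 / real n)"
      using bd unfolding cv by simp
  qed
  have L8: "unif_bigO (\<lambda>n k. \<integral>\<omega>. (Zst A n 0 k \<omega>)^3 * Zst A n 1 k \<omega> * Zst A n 2 k \<omega> * Zst A n 3 k \<omega> \<partial>M) (\<lambda>n. 1 / (real n)^2)"
    unfolding unif_bigO_def
  proof (intro exI[of _ "12 * (4 * (Kb 3 + (Kb 4 + Kb 2) / 2))"] exI[of _ "4::nat"] allI impI)
    fix n k assume n: "(4::nat) \<le> n"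
    have cv: "rowseq.EM M (\<lambda>i. A i k) n 3 1 1 1 = (\<integral>\<omega>. (Zst A n 0 k \<omega>)^3 * Zst A n 1 k \<omega> * Zst A n 2 k \<omega> * Zst A n 3 k \<omega> \<partial>M)"
      using conv[of n 1 1 k 3 1] n by simp
    have bd: "\<bar>rowseq.EM M (\<lambda>i. A i k) n 3 1 1 1\<bar> \<le> 12 * (4 * (Kb 3 + (Kb 4 + Kb 2) / 2)) / ((real n)^2)"
      using rowseq.em_bounds(9)[OF RS[of k] n] by (simp add: Kb_def)
    show "\<bar>\<integral>\<omega>. (Zst A n 0 k \<omega>)^3 * Zst A n 1 k \<omega> * Zst A n 2 k \<omega> * Zst A n 3 k \<omega> \<partial>M\<bar> \<le> 12 * (4 * (Kb 3 + (Kb 4 + Kb 2) / 2)) * (1 / (real n)^2)"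
      using bd unfolding cv by simp
  qed
  have S1: "\<forall>n\<ge>2. \<forall>k. (\<integral>\<omega>. Zst A n 0 k \<omega> * Zst A n 1 k \<omega> \<partial>M) = - 1 / (real n - 1)"
  proof (intro allI impI)
    fix n k assume n: "(2::nat) \<le> n"
    have cv: "rowseq.EM M (\<lambda>i. A i k) n 1 1 0 0 = (\<integral>\<omega>. Zst A n 0 k \<omega> * Zst A n 1 k \<omega> \<partial>M)"
      using conv[of n 0 0 k 1 1] n by simp
    show "(\<integral>\<omega>. Zst A n 0 k \<omega> * Zst A n 1 k \<omega> \<partial>M) = - 1 / (real n - 1)"
      using rowseq.item1[OF RS[of k] n pos[OF n]] unfolding cv .
  qed
  have Kb0: "0 \<le> Kb m" for m
  proof -
    interpret R: rowseq M "\<lambda>i. A i 0" "\<integral>\<omega>. A 0 0 \<omega> \<partial>M" t0 Cb \<delta> by (rule RS)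
    show ?thesis using R.momk[of 1 m] by (simp add: Kb_def)
  qed
  have S3: "unif_littleo1 (\<lambda>n k. (\<integral>\<omega>. (Zst A n 0 k \<omega>)^2 * (Zst A n 1 k \<omega>)^2 \<partial>M) - 1)"
    unfolding unif_littleo1_def
  proof (intro allI impI)
    fix \<epsilon>' :: real assume e: "0 < \<epsilon>'"
    show "\<exists>N0. \<forall>n\<ge>N0. \<forall>k. \<bar>(\<integral>\<omega>. (Zst A n 0 k \<omega>)^2 * (Zst A n 1 k \<omega>)^2 \<partial>M) - 1\<bar> \<le> \<epsilon>'"
    proof (intro exI[of _ "nat \<lceil>(1 + Kb 2) / \<epsilon>'\<rceil> + 2"] allI impI)
      fix n k assume n: "nat \<lceil>(1 + Kb 2) / \<epsilon>'\<rceil> + 2 \<le> n"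
      have n2: "2 \<le> n" using n by simp
      have cv: "rowseq.EM M (\<lambda>i. A i k) n 2 2 0 0 = (\<integral>\<omega>. (Zst A n 0 k \<omega>)^2 * (Zst A n 1 k \<omega>)^2 \<partial>M)"
        using conv[of n 0 0 k 2 2] n2 by simp
      have b: "\<bar>rowseq.EM M (\<lambda>i. A i k) n 2 2 0 0 - 1\<bar> \<le> (1 + Kb 2) / (real n - 1)"
        using rowseq.item3[OF RS[of k] n2 pos[OF n2]] by (simp add: Kb_def)
      have np: "0 < real n - 1" using n2 by simp
      have "(1 + Kb 2) / \<epsilon>' \<le> real (nat \<lceil>(1 + Kb 2) / \<epsilon>'\<rceil>)" by linarith
      also have "\<dots> \<le> real n - 1" using n by linarith
      finally have "(1 + Kb 2) / \<epsilon>' \<le> real n - 1" .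
      then have "1 + Kb 2 \<le> \<epsilon>' * (real n - 1)" using e by (simp add: field_simps)
      then have "(1 + Kb 2) / (real n - 1) \<le> \<epsilon>'" using np by (simp add: field_simps)
      then show "\<bar>(\<integral>\<omega>. (Zst A n 0 k \<omega>)^2 * (Zst A n 1 k \<omega>)^2 \<partial>M) - 1\<bar> \<le> \<epsilon>'"
        using b unfolding cv by linarith
    qed
  qed
  have S2: "\<forall>p::real. p \<ge> 1 \<longrightarrow> unif_bigO (\<lambda>n k. \<integral>\<omega>. \<bar>Zst A n 0 k \<omega>\<bar> powr p \<partial>M) (\<lambda>n. 1)"
  proof (intro allI impI)
    fix p :: real assume p: "1 \<le> p"
    define m where "m = nat \<lceil>p\<rceil>"
    have pm: "p \<le> real (2*m)" unfolding m_def using p by linarith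
    show "unif_bigO (\<lambda>n k. \<integral>\<omega>. \<bar>Zst A n 0 k \<omega>\<bar> powr p \<partial>M) (\<lambda>n. 1)"
      unfolding unif_bigO_def
    proof (intro exI[of _ "1 + Kb m"] exI[of _ "2::nat"] allI impI)
      fix n k assume n: "(2::nat) \<le> n"
      interpret R: rowseq M "\<lambda>i. A i k" "\<integral>\<omega>. A 0 k \<omega> \<partial>M" t0 Cb \<delta> by (rule RS)
      have n0: "0 < n" using n by simp
      have eqi: "(\<integral>\<omega>. \<bar>Zst A n 0 k \<omega>\<bar> powr p \<partial>M) = (\<integral>\<omega>. \<bar>zv n (\<lambda>j. A j k \<omega>) 0\<bar> powr p \<partial>M)"
        using n0 by (simp add: Zst_zv)
      have zm: "(\<lambda>\<omega>. zv n (\<lambda>j. A j k \<omega>) 0) \<in> borel_measurable M"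
        by (rule measurable_compose[OF R.Zv_meas measurable_component_singleton]) auto
      have i2: "integrable M (\<lambda>\<omega>. 1 + zv n (\<lambda>j. A j k \<omega>) 0 ^ (2*m))"
        using R.Z_pow_int[OF n0, of 0 "2*m"] by simp
      have pw: "\<bar>zv n (\<lambda>j. A j k \<omega>) 0\<bar> powr p \<le> 1 + zv n (\<lambda>j. A j k \<omega>) 0 ^ (2*m)" for \<omega>
        by (rule powr_bound[OF p pm])
      have i1: "integrable M (\<lambda>\<omega>. \<bar>zv n (\<lambda>j. A j k \<omega>) 0\<bar> powr p)"
      proof (rule Bochner_Integration.integrable_bound[OF i2])
        show "(\<lambda>\<omega>. \<bar>zv n (\<lambda>j. A j k \<omega>) 0\<bar> powr p) \<in> borel_measurable M" using zm by measurable
        show "AE \<omega> in M. norm (\<bar>zv n (\<lambda>j. A j k \<omega>) 0\<bar> powr p) \<le> norm (1 + zv n (\<lambda>j. A j k \<omega>) 0 ^ (2*m))"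
        proof (rule AE_I2)
          fix \<omega>
          have "0 \<le> zv n (\<lambda>j. A j k \<omega>) 0 ^ (2*m)" by (simp add: zero_le_even_power)
          then show "norm (\<bar>zv n (\<lambda>j. A j k \<omega>) 0\<bar> powr p) \<le> norm (1 + zv n (\<lambda>j. A j k \<omega>) 0 ^ (2*m))"
            using pw[of \<omega>] by simp
        qed
      qed
      have "(\<integral>\<omega>. \<bar>zv n (\<lambda>j. A j k \<omega>) 0\<bar> powr p \<partial>M) \<le> (\<integral>\<omega>. 1 + zv n (\<lambda>j. A j k \<omega>) 0 ^ (2*m) \<partial>M)"
        by (rule integral_mono[OF i1 i2 pw])
      also have "\<dots> = 1 + (\<integral>\<omega>. zv n (\<lambda>j. A j k \<omega>) 0 ^ (2*m) \<partial>M)"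
        using R.Z_pow_int[OF n0, of 0 "2*m"] by (simp add: P.prob_space)
      also have "\<dots> \<le> 1 + Kb m" using R.moment_bound[OF n0, of m] by (simp add: Kb_def)
      finally have up: "(\<integral>\<omega>. \<bar>zv n (\<lambda>j. A j k \<omega>) 0\<bar> powr p \<partial>M) \<le> 1 + Kb m" .
      have "0 \<le> (\<integral>\<omega>. \<bar>zv n (\<lambda>j. A j k \<omega>) 0\<bar> powr p \<partial>M)" by (rule integral_nonneg_AE) simp
      then show "\<bar>\<integral>\<omega>. \<bar>Zst A n 0 k \<omega>\<bar> powr p \<partial>M\<bar> \<le> (1 + Kb m) * 1"
        using up unfolding eqi by simp
    qed
  qed
  show ?thesis by (intro conjI S1 S2 S3 L0 L1 L2 L3 L4 L5 L6 L7 L8)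
qed

end
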